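(* Setting: $\mathcal{G}$ is a connected undirected graph with nodes $\{1,\dots,n\}$, edges $\{1,\dots,m\}$ and incidence matrix $B\in\mathbb{R}^{n\times m}$; $p\ge1$ and $E=\begin{bmatrix} I_{p}\\ \mathbf{0}_{(n-p)\times p}\end{bmatrix}$. $T_x,T_\mu,T_\xi,T_\theta,T_\phi$ are diagonal matrices (of sizes $n,m,m,p,p$) with strictly positive diagonal entries, $d\in\mathbb{R}^n$ is a constant (unknown) vector, $h(x)=(h_1(x_1),\dots,h_n(x_n))^T$ with each $h_i$ continuously differentiable and strictly increasing, and $\overline y\in\mathbb{R}^n$ satisfies $\overline y_i\in\mathcal{R}(h_i)$ for all $i$. $Q=\operatorname{diag}(q_1,\dots,q_p)$ with $q_i>0$, $r\in\mathbb{R}^p$, and $L^{com}$ is the Laplacian of a balanced, strongly connected weighted directed graph on $\{1,\dots,p\}$. Let $\overline u=Q^{-1}(\kappa-r)$ with $\kappa=E^T\frac{\mathbb{1}_n\mathbb{1}_n^T}{\mathbb{1}_p^TQ^{-1}\mathbb{1}_p}(d+EQ^{-1}r)$. The maps $f(\mu)=(f_1(\mu_1),\dots,f_m(\mu_m))^T$ and $g(\theta)=(g_1(\theta_1),\dots,g_p(\theta_p))^T$ have components that are continuously differentiable and strictly increasing with $\mathcal{R}(f_k)=(\lambda_k^-,\lambda_k^+)$ and $\mathcal{R}(g_i)=(u_i^-,u_i^+)$, and there exists $\omega\in\mathbb{R}^m$ with $[B^\dagger(E\overline u-d)+(I-B^\dagger B)\omega]_k\in\mathcal{R}(f_k)$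 for all $k$, while $\overline u_i\in\mathcal{R}(g_i)$ for all $i$. Consider the flow network $T_x\dot x=-B\lambda+Eu-d$, $y=h(x)$, in closed loop with the flow controller $T_\mu\dot\mu=B^T(h(x)-\overline y)-(f(\mu)-\xi)$, $T_\xi\dot\xi=f(\mu)-\xi$, $\lambda=f(\mu)$, and the input controller $T_\theta\dot\theta=-E^T(h(x)-\overline y)-(g(\theta)-\phi)$, $T_\phi\dot\phi=g(\theta)-\phi-QL^{com}(Q\phi+r)$, $u=g(\theta)$. Let $(\overline x,\overline\mu,\overline\xi,\overline\theta,\overline\phi)$ be any equilibrium of this closed-loop system and $$\Upsilon_1=\{(x,\mu,\xi,\theta,\phi):\ B(f(\mu)-f(\overline\mu))=\mathbf{0},\ B(\xi-\overline\xi)=\mathbf{0},\ x=\overline x,\ \theta=\overline\theta,\ \phi=\overline\phi\}.$$ Then, for every initial condition, the solution of the closed-loop system converges to a point in $\Upsilon_1$, at which $\lambda=f(\mu)$ is constant, $h(x)=\overline y$ and $u=g(\theta)=\overline u$. Moreover, $u_i^-<u_i(t)<u_i^+$ for all $i\in\{1,\dots,p\}$ and $\lambda_k^-<\lambda_k(t)<\lambda_k^+$ for all $k\in\{1,\dots,m\}$, for all $t\ge0$.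
   Context: $\mathcal{R}(\cdot)$ denotes the range of a function; $B^\dagger$ is the Moore–Penrose pseudoinverse; $\mathbb{1}_k$ is the all-ones vector of length $k$. The incidence matrix $B$ is obtained by arbitrarily orienting each edge: $b_{ik}=+1$ if node $i$ is the positive end of edge $k$, $-1$ if the negative end, $0$ otherwise. The bounds $\lambda_k^-<\lambda_k^+$ and $u_i^-<u_i^+$ are given constants (infinite values allowed, corresponding to unconstrained flows/inputs). A weighted directed graph is balanced if at every node weighted in-degree equals weighted out-degree; $L^{com}=D-A$ with $A$ the weighted adjacency matrix and $D$ the diagonal matrix of weighted out-degrees. The vector $\overline u$ is the minimizer of $\frac12u^TQu+r^Tu$ subject to $\mathbf{0}=-B\lambda+Eu-d$. *)

theory Defs
  imports Complex_Main "HOL-Library.Extended_Real"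
begin

text \<open>Vectors and matrices of varying dimension are represented as functions
  nat => real and nat => nat => real; only the entries with indices below the
  relevant dimension are meaningful.  Nodes are 0..n-1, edges 0..m-1, inputs 0..p-1.\<close>

definition incidence :: "(nat \<Rightarrow> nat) \<Rightarrow> (nat \<Rightarrow> nat) \<Rightarrow> nat \<Rightarrow> nat \<Rightarrow> real" where
  "incidence epos eneg i k = (if i = epos k then 1 else if i = eneg k then -1 else 0)"

definition graph_ok :: "nat \<Rightarrow> nat \<Rightarrow> (nat \<Rightarrow> nat) \<Rightarrow> (nat \<Rightarrow> nat) \<Rightarrow> bool" where
  "graph_ok n m epos eneg \<longleftrightarrow> (\<forall>k<m. epos k < n \<and> eneg k < n \<and> epos k \<noteq> eneg k)"

definition und_adj :: "nat \<Rightarrow> (nat \<Rightarrow> nat) \<Rightarrow> (nat \<Rightarrow> nat) \<Rightarrow> nat \<Rightarrow> nat \<Rightarrow> bool" where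
  "und_adj m epos eneg i j \<longleftrightarrow>
     (\<exists>k<m. (epos k = i \<and> eneg k = j) \<or> (epos k = j \<and> eneg k = i))"

definition graph_connected :: "nat \<Rightarrow> nat \<Rightarrow> (nat \<Rightarrow> nat) \<Rightarrow> (nat \<Rightarrow> nat) \<Rightarrow> bool" where
  "graph_connected n m epos eneg \<longleftrightarrow> (\<forall>i<n. \<forall>j<n. (und_adj m epos eneg)\<^sup>*\<^sup>* i j)"

definition mmul :: "nat \<Rightarrow> (nat \<Rightarrow> nat \<Rightarrow> real) \<Rightarrow> (nat \<Rightarrow> nat \<Rightarrow> real) \<Rightarrow> nat \<Rightarrow> nat \<Rightarrow> real" where
  "mmul k A C = (\<lambda>i j. \<Sum>l<k. A i l * C l j)"

text \<open>Moore--Penrose conditions for X (m x n) to be the pseudoinverse of B (n x m);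
  X is required to vanish outside its m x n block so that it is unique.\<close>
definition penrose :: "nat \<Rightarrow> nat \<Rightarrow> (nat \<Rightarrow> nat \<Rightarrow> real) \<Rightarrow> (nat \<Rightarrow> nat \<Rightarrow> real) \<Rightarrow> bool" where
  "penrose n m B X \<longleftrightarrow>
     (\<forall>i j. \<not> (i < m \<and> j < n) \<longrightarrow> X i j = 0) \<and>
     (\<forall>i<n. \<forall>j<m. mmul n (mmul m B X) B i j = B i j) \<and>
     (\<forall>i<m. \<forall>j<n. mmul m (mmul n X B) X i j = X i j) \<and>
     (\<forall>i<n. \<forall>j<n. mmul m B X i j = mmul m B X j i) \<and>
     (\<forall>i<m. \<forall>j<m. mmul n X B i j = mmul n X B j i)"

definition pinv :: "nat \<Rightarrow> nat \<Rightarrow> (nat \<Rightarrow> nat \<Rightarrow> real) \<Rightarrow> nat \<Rightarrow> nat \<Rightarrow> real" where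
  "pinv n m B = (THE X. penrose n m B X)"

definition C1_strict_incr :: "(real \<Rightarrow> real) \<Rightarrow> bool" where
  "C1_strict_incr \<phi> \<longleftrightarrow> strict_mono \<phi> \<and>
     (\<exists>\<phi>'. (\<forall>s. (\<phi> has_real_derivative \<phi>' s) (at s)) \<and> continuous_on UNIV \<phi>')"

definition open_ival :: "ereal \<Rightarrow> ereal \<Rightarrow> real set" where
  "open_ival lo hi = {s. lo < ereal s \<and> ereal s < hi}"

text \<open>Weighted digraph on 0..p-1 with adjacency weights a (a i j >= 0 is the weight of i -> j).\<close>
definition weighted_digraph :: "nat \<Rightarrow> (nat \<Rightarrow> nat \<Rightarrow> real) \<Rightarrow> bool" where
  "weighted_digraph p a \<longleftrightarrow> (\<forall>i<p. \<forall>j<p. a i j \<ge> 0)"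

definition balanced :: "nat \<Rightarrow> (nat \<Rightarrow> nat \<Rightarrow> real) \<Rightarrow> bool" where
  "balanced p a \<longleftrightarrow> (\<forall>i<p. (\<Sum>j<p. a j i) = (\<Sum>j<p. a i j))"

definition strongly_connected :: "nat \<Rightarrow> (nat \<Rightarrow> nat \<Rightarrow> real) \<Rightarrow> bool" where
  "strongly_connected p a \<longleftrightarrow>
     (\<forall>i<p. \<forall>j<p. (\<lambda>u v. u < p \<and> v < p \<and> a u v > 0)\<^sup>*\<^sup>* i j)"

definition laplacian :: "nat \<Rightarrow> (nat \<Rightarrow> nat \<Rightarrow> real) \<Rightarrow> nat \<Rightarrow> nat \<Rightarrow> real" where
  "laplacian p a i j = (if i = j then (\<Sum>l<p. a i l) else 0) - a i j"

text \<open>ubar = Q^{-1}(kappa - r), kappa = E^T 1 1^T (d + E Q^{-1} r) / (1^T Q^{-1} 1);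
  Q = diag(q).\<close>
definition kappa :: "nat \<Rightarrow> nat \<Rightarrow> (nat \<Rightarrow> real) \<Rightarrow> (nat \<Rightarrow> real) \<Rightarrow> (nat \<Rightarrow> real) \<Rightarrow> nat \<Rightarrow> real" where
  "kappa n p q r d = (\<lambda>i. (\<Sum>l<n. d l + (if l < p then r l / q l else 0)) / (\<Sum>j<p. 1 / q j))"

definition ubar :: "nat \<Rightarrow> nat \<Rightarrow> (nat \<Rightarrow> real) \<Rightarrow> (nat \<Rightarrow> real) \<Rightarrow> (nat \<Rightarrow> real) \<Rightarrow> nat \<Rightarrow> real" where
  "ubar n p q r d = (\<lambda>i. (kappa n p q r d i - r i) / q i)"

text \<open>E u for E = [I_p; 0].\<close>
definition Emul :: "nat \<Rightarrow> (nat \<Rightarrow> real) \<Rightarrow> nat \<Rightarrow> real" where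
  "Emul p u = (\<lambda>i. if i < p then u i else 0)"

text \<open>Right-hand sides (before multiplication with T^{-1}) of the closed loop.\<close>
definition rhs_x :: "nat \<Rightarrow> nat \<Rightarrow> (nat \<Rightarrow> nat \<Rightarrow> real) \<Rightarrow> (nat \<Rightarrow> real \<Rightarrow> real) \<Rightarrow> (nat \<Rightarrow> real \<Rightarrow> real)
    \<Rightarrow> (nat \<Rightarrow> real) \<Rightarrow> (nat \<Rightarrow> real) \<Rightarrow> (nat \<Rightarrow> real) \<Rightarrow> nat \<Rightarrow> real" where
  "rhs_x m p B f g d \<mu> \<theta> i =
     - (\<Sum>k<m. B i k * f k (\<mu> k)) + Emul p (\<lambda>j. g j (\<theta> j)) i - d i"

definition rhs_mu :: "nat \<Rightarrow> (nat \<Rightarrow> nat \<Rightarrow> real) \<Rightarrow> (nat \<Rightarrow> real \<Rightarrow> real) \<Rightarrow> (nat \<Rightarrow> real \<Rightarrow> real)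
    \<Rightarrow> (nat \<Rightarrow> real) \<Rightarrow> (nat \<Rightarrow> real) \<Rightarrow> (nat \<Rightarrow> real) \<Rightarrow> (nat \<Rightarrow> real) \<Rightarrow> nat \<Rightarrow> real" where
  "rhs_mu n B h f ybar x \<mu> \<xi> k =
     (\<Sum>i<n. B i k * (h i (x i) - ybar i)) - (f k (\<mu> k) - \<xi> k)"

definition rhs_xi :: "(nat \<Rightarrow> real \<Rightarrow> real) \<Rightarrow> (nat \<Rightarrow> real) \<Rightarrow> (nat \<Rightarrow> real) \<Rightarrow> nat \<Rightarrow> real" where
  "rhs_xi f \<mu> \<xi> k = f k (\<mu> k) - \<xi> k"

definition rhs_theta :: "(nat \<Rightarrow> real \<Rightarrow> real) \<Rightarrow> (nat \<Rightarrow> real \<Rightarrow> real) \<Rightarrow> (nat \<Rightarrow> real)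
    \<Rightarrow> (nat \<Rightarrow> real) \<Rightarrow> (nat \<Rightarrow> real) \<Rightarrow> (nat \<Rightarrow> real) \<Rightarrow> nat \<Rightarrow> real" where
  "rhs_theta h g ybar x \<theta> \<phi> i = - (h i (x i) - ybar i) - (g i (\<theta> i) - \<phi> i)"

definition rhs_phi :: "nat \<Rightarrow> (nat \<Rightarrow> nat \<Rightarrow> real) \<Rightarrow> (nat \<Rightarrow> real) \<Rightarrow> (nat \<Rightarrow> real)
    \<Rightarrow> (nat \<Rightarrow> real \<Rightarrow> real) \<Rightarrow> (nat \<Rightarrow> real) \<Rightarrow> (nat \<Rightarrow> real) \<Rightarrow> nat \<Rightarrow> real" where
  "rhs_phi p L q r g \<theta> \<phi> i =
     g i (\<theta> i) - \<phi> i - q i * (\<Sum>j<p. L i j * (q j * \<phi> j + r j))"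

end

theory Submission
  imports Defs "HOL-Analysis.Analysis"
begin

definition deriv0 :: "(real \<Rightarrow> real) \<Rightarrow> (real \<Rightarrow> real) \<Rightarrow> bool" where
  "deriv0 y D \<longleftrightarrow> (\<forall>t\<ge>0. (y has_real_derivative D t) (at t within {0..}))"

definition bnd :: "(real \<Rightarrow> real) \<Rightarrow> bool" where
  "bnd y \<longleftrightarrow> (\<exists>M. \<forall>t\<ge>0. \<bar>y t\<bar> \<le> M)"

definition lip :: "(real \<Rightarrow> real) \<Rightarrow> bool" where
  "lip y \<longleftrightarrow> (\<exists>K. \<forall>s\<ge>0. \<forall>t\<ge>0. \<bar>y t - y s\<bar> \<le> K * \<bar>t - s\<bar>)"

definition good :: "(real \<Rightarrow> real) \<Rightarrow> bool" where
  "good y \<longleftrightarrow> bnd y \<and> lip y"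

definition osc :: "(real \<Rightarrow> real) \<Rightarrow> bool" where
  "osc y \<longleftrightarrow> (\<forall>\<delta>>0. ((\<lambda>t. y (t + \<delta>) - y t) \<longlongrightarrow> 0) at_top)"

lemma deriv0_sub:
  assumes "deriv0 y D" "0 \<le> a" "a \<le> x" "x \<le> b"
  shows "(y has_real_derivative D x) (at x within {a..b})"
  using assms unfolding deriv0_def
  by (meson has_field_derivative_subset atLeastAtMost_iff atLeast_iff order_trans subsetI)

lemma mvt_lower:
  assumes "deriv0 y D" "0 \<le> a" "a \<le> b" "\<forall>x\<in>{a..b}. D x \<ge> c"
  shows "y b - y a \<ge> c * (b - a)"
proof -
  have "\<exists>x\<in>{a..b}. y b - y a = (\<lambda>h. D x * h) (b - a)"
    apply (rule mvt_very_simple[OF assms(3)])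
    using deriv0_sub[OF assms(1,2)] by (simp add: has_field_derivative_def)
  then obtain x where "x \<in> {a..b}" "y b - y a = D x * (b - a)" by auto
  then show ?thesis using assms(3,4) by (simp add: mult_right_mono)
qed

lemma mvt_upper:
  assumes "deriv0 y D" "0 \<le> a" "a \<le> b" "\<forall>x\<in>{a..b}. D x \<le> c"
  shows "y b - y a \<le> c * (b - a)"
proof -
  have "deriv0 (\<lambda>t. - y t) (\<lambda>t. - D t)"
    using assms(1) unfolding deriv0_def by (auto intro: derivative_intros)
  from mvt_lower[OF this assms(2,3), of "-c"] assms(4) show ?thesis by auto
qed

lemma mvt_abs:
  assumes "deriv0 y D" "0 \<le> a" "a \<le> b" "\<forall>x\<in>{a..b}. \<bar>D x\<bar> \<le> c"
  shows "\<bar>y b - y a\<bar> \<le> c * (b - a)"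
proof -
  have "y b - y a \<ge> (-c) * (b - a)" apply (rule mvt_lower[OF assms(1-3), of "-c"]) using assms(4) by (auto simp: abs_le_iff)
  moreover have "y b - y a \<le> c * (b - a)" using mvt_upper[OF assms(1-3), of c] assms(4) by (auto simp: abs_le_iff)
  ultimately show ?thesis by auto
qed

lemma lip_of_deriv:
  assumes "deriv0 y D" "\<forall>t\<ge>0. \<bar>D t\<bar> \<le> K"
  shows "lip y"
  unfolding lip_def
proof (intro exI allI impI)
  fix s t :: real assume st: "0 \<le> s" "0 \<le> t"
  show "\<bar>y t - y s\<bar> \<le> K * \<bar>t - s\<bar>"
  proof (cases "s \<le> t")
    case True
    then show ?thesis using mvt_abs[OF assms(1) st(1) True, of K] assms(2) st by auto
  next
    case False
    then show ?thesis using mvt_abs[OF assms(1) st(2), of s K] assms(2) st by auto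
  qed
qed

lemma bnd_comp:
  assumes "\<forall>x. isCont F x" "bnd y"
  shows "bnd (\<lambda>t. F (y t))"
proof -
  obtain M where M: "\<forall>t\<ge>0. \<bar>y t\<bar> \<le> M" using assms(2) unfolding bnd_def by auto
  have "\<exists>K. \<forall>x. -M \<le> x \<and> x \<le> M \<longrightarrow> \<bar>F x\<bar> \<le> K"
  proof (cases "-M \<le> M")
    case True
    show ?thesis
      by (rule isCont_bounded[OF True]) (use assms(1) in \<open>auto intro: continuous_intros\<close>)
  qed auto
  then obtain K where "\<forall>x. -M \<le> x \<and> x \<le> M \<longrightarrow> \<bar>F x\<bar> \<le> K" by auto
  then have "\<forall>t\<ge>0. \<bar>F (y t)\<bar> \<le> K" using M by (auto simp: abs_le_iff)
  then show ?thesis unfolding bnd_def by auto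
qed

lemma C1_lip:
  assumes "\<forall>x. (F has_real_derivative F' x) (at x)" "continuous_on UNIV F'"
  shows "\<exists>K\<ge>0. \<forall>a b. \<bar>a\<bar> \<le> M \<longrightarrow> \<bar>b\<bar> \<le> M \<longrightarrow> \<bar>F b - F a\<bar> \<le> K * \<bar>b - a\<bar>"
proof -
  have ic: "\<forall>x. isCont F' x" using assms(2) by (simp add: continuous_on_eq_continuous_at)
  have "\<exists>K. \<forall>x. -M \<le> x \<and> x \<le> M \<longrightarrow> \<bar>F' x\<bar> \<le> K"
  proof (cases "-M \<le> M")
    case True
    show ?thesis
      by (rule isCont_bounded[OF True]) (use ic in \<open>auto intro: continuous_intros\<close>)
  qed auto
  then obtain K where K: "\<forall>x. -M \<le> x \<and> x \<le> M \<longrightarrow> \<bar>F' x\<bar> \<le> K" by auto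
  have main: "\<bar>F b - F a\<bar> \<le> max K 0 * \<bar>b - a\<bar>" if "\<bar>a\<bar> \<le> M" "\<bar>b\<bar> \<le> M" "a < b" for a b
  proof -
    obtain z where z: "a < z" "z < b" "F b - F a = (b - a) * F' z"
      using MVT2[OF \<open>a < b\<close>, of F F'] assms(1) by auto
    have "-M \<le> z \<and> z \<le> M" using z that by (auto simp: abs_le_iff)
    then have "\<bar>F' z\<bar> \<le> max K 0" using K by force
    then have "\<bar>(b - a) * F' z\<bar> \<le> \<bar>b - a\<bar> * max K 0"
      by (simp add: abs_mult mult_left_mono)
    then show ?thesis using z by (simp add: mult.commute)
  qed
  have "\<forall>a b. \<bar>a\<bar> \<le> M \<longrightarrow> \<bar>b\<bar> \<le> M \<longrightarrow> \<bar>F b - F a\<bar> \<le> max K 0 * \<bar>b - a\<bar>"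
  proof (intro allI impI)
    fix a b :: real assume ab: "\<bar>a\<bar> \<le> M" "\<bar>b\<bar> \<le> M"
    consider "a < b" | "a = b" | "b < a" by linarith
    then show "\<bar>F b - F a\<bar> \<le> max K 0 * \<bar>b - a\<bar>"
    proof cases
      case 3 then show ?thesis using main[OF ab(2,1)] by (simp add: abs_minus_commute)
    qed (use main ab in auto)
  qed
  then show ?thesis by (intro exI[of _ "max K 0"]) auto
qed

lemma good_comp:
  assumes "\<forall>x. (F has_real_derivative F' x) (at x)" "continuous_on UNIV F'" "good y"
  shows "good (\<lambda>t. F (y t))"
proof -
  have ic: "\<forall>x. isCont F x" using assms(1) by (metis DERIV_isCont)
  obtain M where M: "\<forall>t\<ge>0. \<bar>y t\<bar> \<le> M" using assms(3) unfolding good_def bnd_def by auto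
  obtain L where L: "\<forall>s\<ge>0. \<forall>t\<ge>0. \<bar>y t - y s\<bar> \<le> L * \<bar>t - s\<bar>" using assms(3) unfolding good_def lip_def by auto
  obtain K where K: "K \<ge> 0" "\<forall>a b. \<bar>a\<bar> \<le> M \<longrightarrow> \<bar>b\<bar> \<le> M \<longrightarrow> \<bar>F b - F a\<bar> \<le> K * \<bar>b - a\<bar>"
    using C1_lip[OF assms(1,2)] by blast
  have "lip (\<lambda>t. F (y t))"
    unfolding lip_def
  proof (intro exI[of _ "K * L"] allI impI)
    fix s t :: real assume st: "0 \<le> s" "0 \<le> t"
    have "\<bar>F (y t) - F (y s)\<bar> \<le> K * \<bar>y t - y s\<bar>" using K M st by auto
    also have "\<dots> \<le> K * (L * \<bar>t - s\<bar>)" using L st K(1) by (simp add: mult_left_mono)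
    finally show "\<bar>F (y t) - F (y s)\<bar> \<le> K * L * \<bar>t - s\<bar>" by simp
  qed
  then show ?thesis using bnd_comp[OF ic] assms(3) unfolding good_def by auto
qed

lemma good_const: "good (\<lambda>t. c)"
  unfolding good_def bnd_def lip_def by (auto intro: exI[of _ 0])

lemma good_add: "good y \<Longrightarrow> good z \<Longrightarrow> good (\<lambda>t. y t + z t)"
  unfolding good_def bnd_def lip_def
proof (elim conjE exE, intro conjI)
  fix M1 M2 K1 K2
  assume h: "\<forall>t\<ge>0. \<bar>y t\<bar> \<le> M1" "\<forall>t\<ge>0. \<bar>z t\<bar> \<le> M2"
    "\<forall>s\<ge>0. \<forall>t\<ge>0. \<bar>y t - y s\<bar> \<le> K1 * \<bar>t - s\<bar>" "\<forall>s\<ge>0. \<forall>t\<ge>0. \<bar>z t - z s\<bar> \<le> K2 * \<bar>t - s\<bar>"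
  show "\<exists>M. \<forall>t\<ge>0. \<bar>y t + z t\<bar> \<le> M"
    using h(1,2) by (intro exI[of _ "M1 + M2"]) (smt (verit))
  show "\<exists>K. \<forall>s\<ge>0. \<forall>t\<ge>0. \<bar>y t + z t - (y s + z s)\<bar> \<le> K * \<bar>t - s\<bar>"
  proof (intro exI[of _ "K1 + K2"] allI impI)
    fix s t :: real assume "0 \<le> s" "0 \<le> t"
    then have "\<bar>y t - y s\<bar> \<le> K1 * \<bar>t - s\<bar>" "\<bar>z t - z s\<bar> \<le> K2 * \<bar>t - s\<bar>" using h by auto
    then show "\<bar>y t + z t - (y s + z s)\<bar> \<le> (K1 + K2) * \<bar>t - s\<bar>" by (simp add: distrib_right)
  qed
qed

lemma good_mult: "good y \<Longrightarrow> good z \<Longrightarrow> good (\<lambda>t. y t * z t)"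
  unfolding good_def bnd_def lip_def
proof (elim conjE exE, intro conjI)
  fix M1 M2 K1 K2
  assume h: "\<forall>t\<ge>0. \<bar>y t\<bar> \<le> M1" "\<forall>t\<ge>0. \<bar>z t\<bar> \<le> M2"
    "\<forall>s\<ge>0. \<forall>t\<ge>0. \<bar>y t - y s\<bar> \<le> K1 * \<bar>t - s\<bar>" "\<forall>s\<ge>0. \<forall>t\<ge>0. \<bar>z t - z s\<bar> \<le> K2 * \<bar>t - s\<bar>"
  show "\<exists>M. \<forall>t\<ge>0. \<bar>y t * z t\<bar> \<le> M"
    using h(1,2) by (intro exI[of _ "M1 * M2"]) (simp add: abs_mult mult_mono')
  show "\<exists>K. \<forall>s\<ge>0. \<forall>t\<ge>0. \<bar>y t * z t - y s * z s\<bar> \<le> K * \<bar>t - s\<bar>"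
  proof (intro exI[of _ "M1 * K2 + M2 * K1"] allI impI)
    fix s t :: real assume st: "0 \<le> s" "0 \<le> t"
    have e: "y t * z t - y s * z s = y t * (z t - z s) + z s * (y t - y s)" by algebra
    have a: "\<bar>y t * (z t - z s)\<bar> \<le> M1 * (K2 * \<bar>t - s\<bar>)"
      unfolding abs_mult using h st by (intro mult_mono) auto
    have b: "\<bar>z s * (y t - y s)\<bar> \<le> M2 * (K1 * \<bar>t - s\<bar>)"
      unfolding abs_mult using h st by (intro mult_mono) auto
    show "\<bar>y t * z t - y s * z s\<bar> \<le> (M1 * K2 + M2 * K1) * \<bar>t - s\<bar>"
      unfolding e using a b by (simp add: algebra_simps)
  qed
qed

lemma good_neg: "good y \<Longrightarrow> good (\<lambda>t. - y t)"
  using good_mult[OF good_const[of "-1"]] by simp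

lemma good_diff: "good y \<Longrightarrow> good z \<Longrightarrow> good (\<lambda>t. y t - z t)"
  using good_add[OF _ good_neg[of z]] by simp

lemma good_sum: "finite S \<Longrightarrow> (\<forall>i\<in>S. good (\<lambda>t. y t i)) \<Longrightarrow> good (\<lambda>t. \<Sum>i\<in>S. y t i)"
proof (induction S rule: finite_induct)
  case empty then show ?case using good_const[of 0] by simp
next
  case (insert x F) then show ?case using good_add[of "\<lambda>t. y t x"] by simp
qed

lemma good_state:
  assumes "bnd y" "deriv0 y D" "bnd D"
  shows "good y"
  using assms lip_of_deriv unfolding good_def bnd_def by blast

lemma t0I:
  fixes f :: "real \<Rightarrow> real"
  assumes "\<And>e. e > 0 \<Longrightarrow> \<exists>T. \<forall>t\<ge>T. \<bar>f t - l\<bar> < e"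
  shows "(f \<longlongrightarrow> l) at_top"
  unfolding tendsto_iff dist_real_def eventually_at_top_linorder using assms by blast

lemma t0D:
  fixes f :: "real \<Rightarrow> real"
  assumes "(f \<longlongrightarrow> l) at_top" "e > 0"
  shows "\<exists>T. \<forall>t\<ge>T. \<bar>f t - l\<bar> < e"
  using assms unfolding tendsto_iff dist_real_def eventually_at_top_linorder by blast

lemma nonincr:
  assumes "deriv0 V D" "\<forall>t\<ge>0. D t \<le> 0" "0 \<le> s" "s \<le> t"
  shows "V t \<le> V s"
  using mvt_upper[OF assms(1) assms(3,4), of 0] assms(2,3) by auto

lemma barbalat:
  assumes dV: "deriv0 V D" and DW: "\<forall>t\<ge>0. D t \<le> - W t" and V0: "\<forall>t\<ge>0. V t \<ge> 0"
    and W0: "\<forall>t\<ge>0. W t \<ge> 0" and lW: "lip W"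
  shows "(W \<longlongrightarrow> 0) at_top"
proof (rule t0I)
  fix e :: real assume e: "e > 0"
  obtain K where K: "\<forall>s\<ge>0. \<forall>t\<ge>0. \<bar>W t - W s\<bar> \<le> K * \<bar>t - s\<bar>" using lW unfolding lip_def by auto
  define K' where "K' = max K 1"
  have K'1: "K' \<ge> 1" unfolding K'_def by auto
  define d where "d = e / (2 * K')"
  have d: "d > 0" unfolding d_def using e K'1 by auto
  have Kd: "K' * d = e / 2" unfolding d_def using K'1 by auto
  define c where "c = d * e / 2"
  have c: "c > 0" unfolding c_def using d e by auto
  define I where "I = Inf (V ` {0..})"
  have bdd: "bdd_below (V ` {0..})" using V0 by (auto intro: bdd_belowI[of _ 0])
  have I_le: "I \<le> V t" if "t \<ge> 0" for t unfolding I_def by (rule cInf_lower) (use bdd that in auto)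
  have "\<exists>v\<in>V ` {0..}. v < I + c" unfolding I_def by (rule cInf_lessD) (use c in auto)
  then obtain t0 where t0: "t0 \<ge> 0" "V t0 < I + c" by auto
  have "\<forall>t\<ge>t0. \<bar>W t - 0\<bar> < e"
  proof (intro allI impI)
    fix t assume tt: "t \<ge> t0"
    have t0': "t \<ge> 0" using tt t0 by auto
    show "\<bar>W t - 0\<bar> < e"
    proof (rule ccontr)
      assume "\<not> \<bar>W t - 0\<bar> < e"
      then have We: "W t \<ge> e" using W0 t0' by auto
      have "\<forall>x\<in>{t..t+d}. D x \<le> - (e/2)"
      proof
        fix x assume x: "x \<in> {t..t+d}"
        have "\<bar>W x - W t\<bar> \<le> K * \<bar>x - t\<bar>" using K[rule_format, of t x] x t0' by auto
        also have "\<dots> \<le> K' * \<bar>x - t\<bar>" unfolding K'_def by (simp add: mult_right_mono)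
        also have "\<dots> \<le> K' * d" using x K'1 by (intro mult_left_mono) auto
        finally have "W x \<ge> e / 2" using We Kd by linarith
        moreover have "D x \<le> - W x" using DW x t0' by auto
        ultimately show "D x \<le> - (e/2)" by linarith
      qed
      from mvt_upper[OF dV t0' _ this] d have "V (t + d) - V t \<le> - (e/2) * d" by auto
      moreover have "V t \<le> V t0" using nonincr[OF dV _ t0(1) tt] DW W0 by force
      moreover have "I \<le> V (t + d)" using I_le t0' d by auto
      ultimately show False using t0 unfolding c_def by (simp add: algebra_simps)
    qed
  qed
  then show "\<exists>T. \<forall>t\<ge>T. \<bar>W t - 0\<bar> < e" by blast
qed

lemma window:
  assumes ds: "deriv0 s D" and Dab: "\<forall>t\<ge>0. D t = a t + b t" and la: "lip a"
    and b0: "(b \<longlongrightarrow> 0) at_top" and os: "osc s"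
  shows "(a \<longlongrightarrow> 0) at_top"
proof (rule t0I)
  fix e :: real assume e: "e > 0"
  obtain K where K: "\<forall>s\<ge>0. \<forall>t\<ge>0. \<bar>a t - a s\<bar> \<le> K * \<bar>t - s\<bar>" using la unfolding lip_def by auto
  define K' where "K' = max K 1"
  have K'1: "K' \<ge> 1" unfolding K'_def by auto
  define d where "d = e / (2 * K')"
  have d: "d > 0" unfolding d_def using e K'1 by auto
  have Kd: "K' * d = e / 2" unfolding d_def using K'1 by auto
  obtain T1 where T1: "\<forall>t\<ge>T1. \<bar>b t - 0\<bar> < e/4" using t0D[OF b0, of "e/4"] e by auto
  have "((\<lambda>t. s (t + d) - s t) \<longlongrightarrow> 0) at_top" using os d unfolding osc_def by auto
  from t0D[OF this, of "d * e / 4"] obtain T2 where T2: "\<forall>t\<ge>T2. \<bar>s (t + d) - s t - 0\<bar> < d * e / 4"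
    using d e by auto
  have "\<forall>t\<ge>max (max T1 T2) 0. \<bar>a t - 0\<bar> < e"
  proof (intro allI impI)
    fix t assume tt: "t \<ge> max (max T1 T2) 0"
    have t0: "t \<ge> 0" using tt by auto
    have near: "\<bar>a x - a t\<bar> \<le> e / 2" if x: "x \<in> {t..t+d}" for x
    proof -
      have "\<bar>a x - a t\<bar> \<le> K * \<bar>x - t\<bar>" using K[rule_format, of t x] x t0 by auto
      also have "\<dots> \<le> K' * \<bar>x - t\<bar>" unfolding K'_def by (simp add: mult_right_mono)
      also have "\<dots> \<le> K' * d" using x K'1 by (intro mult_left_mono) auto
      finally show ?thesis using Kd by linarith
    qed
    have bs: "\<bar>b x\<bar> < e / 4" if x: "x \<in> {t..t+d}" for x using T1 x tt by auto
    have sd: "\<bar>s (t + d) - s t\<bar> < d * e / 4" using T2 tt by auto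
    show "\<bar>a t - 0\<bar> < e"
    proof (rule ccontr)
      assume "\<not> \<bar>a t - 0\<bar> < e"
      then consider "a t \<ge> e" | "a t \<le> -e" by linarith
      then show False
      proof cases
        case 1
        have "\<forall>x\<in>{t..t+d}. D x \<ge> e / 4"
        proof
          fix x assume x: "x \<in> {t..t+d}"
          have "a x \<ge> e / 2" using near[OF x] 1 by linarith
          then show "D x \<ge> e / 4" using Dab bs[OF x] x t0 by force
        qed
        from mvt_lower[OF ds t0 _ this] d have "s (t + d) - s t \<ge> e / 4 * d" by auto
        moreover have "e / 4 * d = d * e / 4" by simp
        moreover have "s (t + d) - s t < d * e / 4" using sd by linarith
        ultimately show False by linarith
      next
        case 2
        have "\<forall>x\<in>{t..t+d}. D x \<le> - (e / 4)"
        proof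
          fix x assume x: "x \<in> {t..t+d}"
          have "a x \<le> - (e / 2)" using near[OF x] 2 by linarith
          then show "D x \<le> - (e / 4)" using Dab bs[OF x] x t0 by force
        qed
        from mvt_upper[OF ds t0 _ this] d have "s (t + d) - s t \<le> - (e / 4) * d" by auto
        moreover have "- (e / 4) * d = - (d * e / 4)" by simp
        moreover have "s (t + d) - s t > - (d * e / 4)" using sd by linarith
        ultimately show False by linarith
      qed
    qed
  qed
  then show "\<exists>T. \<forall>t\<ge>T. \<bar>a t - 0\<bar> < e" by blast
qed

lemma osc_conv:
  assumes "(s \<longlongrightarrow> l) at_top"
  shows "osc s"
  unfolding osc_def
proof (intro allI impI t0I)
  fix d e :: real assume d: "d > 0" and e: "e > 0"
  obtain T where T: "\<forall>t\<ge>T. \<bar>s t - l\<bar> < e / 2" using t0D[OF assms, of "e/2"] e by auto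
  have "\<forall>t\<ge>T. \<bar>s (t + d) - s t - 0\<bar> < e"
  proof (intro allI impI)
    fix t assume "t \<ge> T"
    then have "\<bar>s t - l\<bar> < e/2" "\<bar>s (t+d) - l\<bar> < e/2" using T d by auto
    then show "\<bar>s (t + d) - s t - 0\<bar> < e" by linarith
  qed
  then show "\<exists>T. \<forall>t\<ge>T. \<bar>s (t + d) - s t - 0\<bar> < e" by blast
qed

lemma osc_deriv:
  assumes ds: "deriv0 s D" and D0: "(D \<longlongrightarrow> 0) at_top"
  shows "osc s"
  unfolding osc_def
proof (intro allI impI t0I)
  fix d e :: real assume d: "d > 0" and e: "e > 0"
  obtain T where T: "\<forall>t\<ge>T. \<bar>D t - 0\<bar> < e / (2 * d)" using t0D[OF D0, of "e/(2*d)"] e d by auto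
  have "\<forall>t\<ge>max T 0. \<bar>s (t + d) - s t - 0\<bar> < e"
  proof (intro allI impI)
    fix t assume t: "t \<ge> max T 0"
    have "\<bar>s (t + d) - s t\<bar> \<le> e / (2 * d) * (t + d - t)"
      by (rule mvt_abs[OF ds]) (use t T d in \<open>auto intro: less_imp_le\<close>)
    also have "\<dots> = e / 2" using d by simp
    finally show "\<bar>s (t + d) - s t - 0\<bar> < e" using e by simp
  qed
  then show "\<exists>T. \<forall>t\<ge>T. \<bar>s (t + d) - s t - 0\<bar> < e" by blast
qed

lemma osc_add: "osc s \<Longrightarrow> osc r \<Longrightarrow> osc (\<lambda>t. s t + r t)"
  unfolding osc_def
proof (intro allI impI)
  fix d :: real assume "\<forall>d>0. ((\<lambda>t. s (t + d) - s t) \<longlongrightarrow> 0) at_top"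
    "\<forall>d>0. ((\<lambda>t. r (t + d) - r t) \<longlongrightarrow> 0) at_top" "d > 0"
  then have "((\<lambda>t. (s (t + d) - s t) + (r (t + d) - r t)) \<longlongrightarrow> 0 + 0) at_top"
    by (intro tendsto_add) auto
  then show "((\<lambda>t. s (t + d) + r (t + d) - (s t + r t)) \<longlongrightarrow> 0) at_top" by (simp add: algebra_simps)
qed

lemma osc_cmult: "osc s \<Longrightarrow> osc (\<lambda>t. c * s t)"
  unfolding osc_def
proof (intro allI impI)
  fix d :: real assume "\<forall>d>0. ((\<lambda>t. s (t + d) - s t) \<longlongrightarrow> 0) at_top" "d > 0"
  then have "((\<lambda>t. c * (s (t + d) - s t)) \<longlongrightarrow> c * 0) at_top"
    by (intro tendsto_mult) auto
  then show "((\<lambda>t. c * s (t + d) - c * s t) \<longlongrightarrow> 0) at_top" by (simp add: algebra_simps)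
qed

lemma osc_diff: "osc s \<Longrightarrow> osc r \<Longrightarrow> osc (\<lambda>t. s t - r t)"
  using osc_add[OF _ osc_cmult[of r "-1"], of s] by simp

lemma osc_inv:
  assumes sm: "strict_mono F" and ic: "\<forall>x. isCont F x" and bs: "bnd s" and os: "osc (\<lambda>t. F (s t))"
  shows "osc s"
  unfolding osc_def
proof (intro allI impI t0I)
  fix d e :: real assume d: "d > 0" and e: "e > 0"
  obtain M where M: "\<forall>t\<ge>0. \<bar>s t\<bar> \<le> M" using bs unfolding bnd_def by auto
  have M0: "M \<ge> 0" using M[rule_format, of 0] by auto
  have "\<exists>x\<in>{-M..M}. \<forall>y\<in>{-M..M}. F (x + e) - F x \<le> F (y + e) - F y"
  proof (rule continuous_attains_inf)
    have "isCont (\<lambda>x. F (x + e) - F x) x" for x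
    proof -
      have "isCont (\<lambda>x. F (x + e)) x"
        by (rule isCont_o2[where f="\<lambda>x. x + e"]) (auto intro: ic[rule_format] continuous_intros)
      then show ?thesis using ic by (auto intro: continuous_intros)
    qed
    then show "continuous_on {-M..M} (\<lambda>x. F (x + e) - F x)" by (simp add: continuous_at_imp_continuous_on)
  qed (use M0 in auto)
  then obtain x0 where x0: "x0 \<in> {-M..M}" "\<forall>y\<in>{-M..M}. F (x0 + e) - F x0 \<le> F (y + e) - F y" by auto
  define eta where "eta = F (x0 + e) - F x0"
  have eta: "eta > 0" unfolding eta_def using sm e by (simp add: strict_mono_less)
  have "((\<lambda>t. F (s (t + d)) - F (s t)) \<longlongrightarrow> 0) at_top" using os d unfolding osc_def by auto
  from t0D[OF this eta] obtain T where T: "\<forall>t\<ge>T. \<bar>F (s (t + d)) - F (s t) - 0\<bar> < eta" by auto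
  have "\<forall>t\<ge>max T 0. \<bar>s (t + d) - s t - 0\<bar> < e"
  proof (intro allI impI)
    fix t assume t: "t \<ge> max T 0"
    have st: "s t \<in> {-M..M}" "s (t + d) \<in> {-M..M}" using M[rule_format, of t] M[rule_format, of "t+d"] t d by (auto simp: abs_le_iff)
    have Fd: "\<bar>F (s (t + d)) - F (s t)\<bar> < eta" using T t by auto
    show "\<bar>s (t + d) - s t - 0\<bar> < e"
    proof (rule ccontr)
      assume "\<not> \<bar>s (t + d) - s t - 0\<bar> < e"
      then consider "s (t + d) \<ge> s t + e" | "s t \<ge> s (t + d) + e" by linarith
      then show False
      proof cases
        case 1
        have "F (s (t + d)) \<ge> F (s t + e)" using 1 sm by (simp add: strict_mono_less_eq)
        moreover have "eta \<le> F (s t + e) - F (s t)" using x0 st unfolding eta_def by auto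
        ultimately show False using Fd by linarith
      next
        case 2
        have "F (s t) \<ge> F (s (t + d) + e)" using 2 sm by (simp add: strict_mono_less_eq)
        moreover have "eta \<le> F (s (t + d) + e) - F (s (t + d))" using x0 st unfolding eta_def by auto
        ultimately show False using Fd by linarith
      qed
    qed
  qed
  then show "\<exists>T. \<forall>t\<ge>T. \<bar>s (t + d) - s t - 0\<bar> < e" by blast
qed

lemma inv_lim:
  fixes F y :: "real \<Rightarrow> real"
  assumes sm: "strict_mono F" and lim: "((\<lambda>t. F (y t)) \<longlongrightarrow> F c) at_top"
  shows "(y \<longlongrightarrow> c) at_top"
proof (rule t0I)
  fix e :: real assume e: "e > 0"
  define eta where "eta = min (F (c + e) - F c) (F c - F (c - e))"
  have eta: "eta > 0" unfolding eta_def using sm e by (simp add: strict_mono_less)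
  from t0D[OF lim eta] obtain T where T: "\<forall>t\<ge>T. \<bar>F (y t) - F c\<bar> < eta" by auto
  have "\<forall>t\<ge>T. \<bar>y t - c\<bar> < e"
  proof (intro allI impI)
    fix t assume "t \<ge> T"
    then have "F (y t) < F (c + e)" "F (c - e) < F (y t)" using T unfolding eta_def by auto
    then show "\<bar>y t - c\<bar> < e" using sm by (simp add: strict_mono_less abs_less_iff)
  qed
  then show "\<exists>T. \<forall>t\<ge>T. \<bar>y t - c\<bar> < e" by blast
qed

definition pot :: "(real \<Rightarrow> real) \<Rightarrow> real \<Rightarrow> real \<Rightarrow> real" where
  "pot F c = (SOME G. G c = 0 \<and> (\<forall>x. (G has_real_derivative F x - F c) (at x)))"

lemma pot_ex:
  fixes F :: "real \<Rightarrow> real"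
  assumes "\<forall>x. isCont F x"
  shows "\<exists>G. G c = 0 \<and> (\<forall>x. (G has_real_derivative F x - F c) (at x))"
proof -
  have "\<exists>H. \<forall>x :: real. -\<infinity> < ereal x \<longrightarrow> ereal x < \<infinity> \<longrightarrow> (H has_vector_derivative F x) (at x)"
    by (rule einterval_antiderivative) (use assms in auto)
  then obtain H where H: "\<forall>x. (H has_real_derivative F x) (at x)"
    by (auto simp: has_real_derivative_iff_has_vector_derivative)
  define G where "G x = H x - H c - F c * (x - c)" for x
  have "(G has_real_derivative F x - F c) (at x)" for x
    unfolding G_def using H by (auto intro!: derivative_eq_intros)
  moreover have "G c = 0" unfolding G_def by simp
  ultimately show ?thesis by blast
qed

locale potl =
  fixes F :: "real \<Rightarrow> real"
  assumes sm: "strict_mono F" and ic: "\<forall>x. isCont F x"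
begin

lemma G_props: "pot F c c = 0 \<and> (\<forall>x. ((pot F c) has_real_derivative F x - F c) (at x))"
  unfolding pot_def by (rule someI_ex[OF pot_ex[OF ic]])

lemma G_c: "pot F c c = 0" using G_props by auto
lemma G_der: "((pot F c) has_real_derivative F x - F c) (at x)" using G_props by auto

lemma G_cont: "isCont (pot F c) x" using G_der DERIV_isCont by blast

lemma G_incr: "c \<le> y \<Longrightarrow> y \<le> x \<Longrightarrow> pot F c y \<le> pot F c x"
  apply (rule DERIV_nonneg_imp_nondecreasing[of y x "pot F c"])
  subgoal by simp
  subgoal for z using G_der[of c z] sm by (intro exI[of _ "F z - F c"]) (auto simp: strict_mono_less_eq)
  done

lemma G_decr: "x \<le> y \<Longrightarrow> y \<le> c \<Longrightarrow> pot F c y \<le> pot F c x"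
  apply (rule DERIV_nonpos_imp_nonincreasing[of x y "pot F c"])
  subgoal by simp
  subgoal for z using G_der[of c z] sm by (intro exI[of _ "F z - F c"]) (auto simp: strict_mono_less_eq)
  done

lemma G_nonneg: "pot F c x \<ge> 0"
proof (cases "c \<le> x")
  case True then show ?thesis using G_incr[of c c x] G_c[of c] by auto
next
  case False then show ?thesis using G_decr[of x c c] G_c[of c] by auto
qed

lemma G_pos: "x \<noteq> c \<Longrightarrow> pot F c x > 0"
proof -
  assume "x \<noteq> c"
  then consider "c < x" | "x < c" by linarith
  then show ?thesis
  proof cases
    case 1
    obtain z where z: "c < z" "z < x" "pot F c x - pot F c c = (x - c) * (F z - F c)"
      using MVT2[OF 1, of "pot F c" "\<lambda>z. F z - F c"] G_der by auto
    have "F z - F c > 0" using z sm by (simp add: strict_mono_less)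
    then show ?thesis using z 1 G_c by simp
  next
    case 2
    obtain z where z: "x < z" "z < c" "pot F c c - pot F c x = (c - x) * (F z - F c)"
      using MVT2[OF 2, of "pot F c" "\<lambda>z. F z - F c"] G_der by auto
    have "F z - F c < 0" using z sm by (simp add: strict_mono_less)
    then have "(c - x) * (F z - F c) < 0" using 2 by (simp add: mult_pos_neg)
    then show ?thesis using z G_c by simp
  qed
qed

lemma G_definite:
  assumes "e > 0"
  shows "\<exists>eta>0. \<forall>x. \<bar>x - c\<bar> \<ge> e \<longrightarrow> pot F c x \<ge> eta"
proof (intro exI[of _ "min (pot F c (c + e)) (pot F c (c - e))"] conjI allI impI)
  have "pot F c (c + e) > 0" "pot F c (c - e) > 0" by (rule G_pos, use assms in simp)+
  then show "min (pot F c (c + e)) (pot F c (c - e)) > 0" by simp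
  fix x assume "\<bar>x - c\<bar> \<ge> e"
  then consider "x \<ge> c + e" | "x \<le> c - e" by linarith
  then show "pot F c x \<ge> min (pot F c (c + e)) (pot F c (c - e))"
  proof cases
    case 1 then show ?thesis using G_incr[of c "c + e" x] assms by auto
  next
    case 2 then show ?thesis using G_decr[of x "c - e" c] assms by auto
  qed
qed

lemma G_radial: "\<exists>R. \<forall>x. pot F c x \<le> M \<longrightarrow> \<bar>x\<bar> \<le> R"
proof -
  define a where "a = min (F (c + 1) - F c) (F c - F (c - 1))"
  have a: "a > 0" unfolding a_def using sm by (simp add: strict_mono_less)
  define R where "R = \<bar>c\<bar> + 1 + max M 0 / a"
  have "\<bar>x\<bar> \<le> R" if Gx: "pot F c x \<le> M" for x
  proof -
    have "x \<le> c + 1 + max M 0 / a"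
    proof (rule ccontr)
      assume "\<not> ?thesis"
      then have x1: "x > c + 1" using a by (smt (verit) divide_nonneg_pos max.cobounded2)
      obtain z where z: "c + 1 < z" "z < x" "pot F c x - pot F c (c + 1) = (x - (c + 1)) * (F z - F c)"
        using MVT2[OF x1, of "pot F c" "\<lambda>z. F z - F c"] G_der by auto
      have "F z - F c \<ge> a" unfolding a_def using z sm by (smt (verit) strict_mono_less)
      then have "(x - (c + 1)) * (F z - F c) \<ge> (x - (c + 1)) * a" using x1 by (simp add: mult_left_mono)
      moreover have "(x - (c + 1)) * a > max M 0" 
        using \<open>\<not> x \<le> c + 1 + max M 0 / a\<close> a by (simp add: field_simps)
      ultimately show False using z G_nonneg[of c "c + 1"] Gx by linarith
    qed
    moreover have "x \<ge> c - 1 - max M 0 / a"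
    proof (rule ccontr)
      assume "\<not> ?thesis"
      then have x1: "x < c - 1" using a by (smt (verit) divide_nonneg_pos max.cobounded2)
      obtain z where z: "x < z" "z < c - 1" "pot F c (c - 1) - pot F c x = (c - 1 - x) * (F z - F c)"
        using MVT2[OF x1, of "pot F c" "\<lambda>z. F z - F c"] G_der by auto
      have "F c - F z \<ge> a" unfolding a_def using z sm by (smt (verit) strict_mono_less)
      then have "(c - 1 - x) * (F c - F z) \<ge> (c - 1 - x) * a" using x1 by (simp add: mult_left_mono)
      moreover have "(c - 1 - x) * a > max M 0"
        using \<open>\<not> x \<ge> c - 1 - max M 0 / a\<close> a by (simp add: field_simps)
      moreover have "(c - 1 - x) * (F z - F c) = - ((c - 1 - x) * (F c - F z))" by (simp add: algebra_simps)
      ultimately show False using z G_nonneg[of c "c - 1"] Gx by linarith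
    qed
    ultimately show ?thesis unfolding R_def by (smt (verit) a divide_nonneg_pos max.cobounded2)
  qed
  then show ?thesis by blast
qed

lemma G_lim:
  fixes y :: "real \<Rightarrow> real"
  assumes "((\<lambda>t. pot F c (y t)) \<longlongrightarrow> 0) at_top"
  shows "(y \<longlongrightarrow> c) at_top"
proof (rule t0I)
  fix e :: real assume e: "e > 0"
  obtain eta where eta: "eta > 0" "\<forall>x. \<bar>x - c\<bar> \<ge> e \<longrightarrow> pot F c x \<ge> eta" using G_definite[OF e] by auto
  obtain T where T: "\<forall>t\<ge>T. \<bar>pot F c (y t) - 0\<bar> < eta" using t0D[OF assms eta(1)] by auto
  have "\<forall>t\<ge>T. \<bar>y t - c\<bar> < e"
  proof (intro allI impI)
    fix t assume "t \<ge> T"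
    then have "\<bar>pot F c (y t) - 0\<bar> < eta" using T by blast
    then have "\<not> pot F c (y t) \<ge> eta" by linarith
    then show "\<bar>y t - c\<bar> < e" using eta(2) by (meson not_le)
  qed
  then show "\<exists>T. \<forall>t\<ge>T. \<bar>y t - c\<bar> < e" by blast
qed

end

lemma C1_potl: "C1_strict_incr F \<Longrightarrow> potl F"
  unfolding C1_strict_incr_def potl_def using DERIV_isCont by blast

lemma inc_sum:
  assumes "graph_ok n m epos eneg" "k < m"
  shows "(\<Sum>i<n. incidence epos eneg i k * v i) = v (epos k) - v (eneg k)"
proof -
  have k: "epos k < n" "eneg k < n" "epos k \<noteq> eneg k" using assms unfolding graph_ok_def by auto
  have "(\<Sum>i<n. incidence epos eneg i k * v i) =
        (\<Sum>i<n. (if i = epos k then v i else 0) + (if i = eneg k then - v i else 0))"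
    by (rule sum.cong) (use k in \<open>auto simp: incidence_def\<close>)
  also have "\<dots> = v (epos k) - v (eneg k)" using k by (simp add: sum.distrib)
  finally show ?thesis .
qed

lemma inc_colsum:
  assumes "graph_ok n m epos eneg" "k < m"
  shows "(\<Sum>i<n. incidence epos eneg i k) = 0"
  using inc_sum[OF assms, of "\<lambda>_. 1"] by simp

lemma conn_tend:
  fixes v :: "'b \<Rightarrow> nat \<Rightarrow> real"
  assumes "graph_connected n m epos eneg"
    and "\<forall>k<m. ((\<lambda>t. v t (epos k) - v t (eneg k)) \<longlongrightarrow> 0) F" "i < n" "j < n"
  shows "((\<lambda>t. v t i - v t j) \<longlongrightarrow> 0) F"
proof -
  have "(und_adj m epos eneg)\<^sup>*\<^sup>* i j" using assms unfolding graph_connected_def by auto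
  then show ?thesis
  proof (induction rule: rtranclp_induct)
    case base then show ?case by simp
  next
    case (step y z)
    obtain k where k: "k < m" "(epos k = y \<and> eneg k = z) \<or> (epos k = z \<and> eneg k = y)"
      using step(2) unfolding und_adj_def by auto
    have "((\<lambda>t. v t y - v t z) \<longlongrightarrow> 0) F"
    proof (cases "epos k = y \<and> eneg k = z")
      case True then show ?thesis using assms(2) k by auto
    next
      case False
      then have "epos k = z \<and> eneg k = y" using k by auto
      then have "((\<lambda>t. - (v t z - v t y)) \<longlongrightarrow> - 0) F" using assms(2) k by (intro tendsto_minus) auto
      then show ?thesis by simp
    qed
    from tendsto_add[OF step(3) this] show ?case by simp
  qed
qed

lemma conn_static:
  assumes "graph_connected n m epos eneg"
    and "\<forall>k<m. w (epos k) = w (eneg k)" "i < n" "j < n"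
  shows "w i = (w j :: real)"
proof -
  have "((\<lambda>t::real. w i - w j) \<longlongrightarrow> 0) at_top"
    using conn_tend[OF assms(1) _ assms(3,4), of "\<lambda>t. w" at_top] assms(2) by auto
  then show ?thesis by (simp add: tendsto_const_iff)
qed

lemma sconn_tend:
  fixes v :: "'b \<Rightarrow> nat \<Rightarrow> real"
  assumes "strongly_connected p a"
    and "\<forall>i<p. \<forall>j<p. a i j > 0 \<longrightarrow> ((\<lambda>t. v t i - v t j) \<longlongrightarrow> 0) F" "i < p" "j < p"
  shows "((\<lambda>t. v t i - v t j) \<longlongrightarrow> 0) F"
proof -
  have "(\<lambda>u v. u < p \<and> v < p \<and> a u v > 0)\<^sup>*\<^sup>* i j" using assms unfolding strongly_connected_def by auto
  then show ?thesis
  proof (induction rule: rtranclp_induct)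
    case base then show ?case by simp
  next
    case (step y z)
    then have "((\<lambda>t. v t y - v t z) \<longlongrightarrow> 0) F" using assms(2) by auto
    from tendsto_add[OF step(3) this] show ?case by simp
  qed
qed

lemma sconn_static:
  assumes "strongly_connected p a"
    and "\<forall>i<p. \<forall>j<p. a i j > 0 \<longrightarrow> w i = w j" "i < p" "j < p"
  shows "w i = (w j :: real)"
proof -
  have "((\<lambda>t::real. w i - w j) \<longlongrightarrow> 0) at_top"
    using sconn_tend[OF assms(1) _ assms(3,4), of "\<lambda>t. w" at_top] assms(2) by auto
  then show ?thesis by (simp add: tendsto_const_iff)
qed

lemma lap_row:
  assumes "i < p"
  shows "(\<Sum>j<p. laplacian p a i j * z j) = (\<Sum>j<p. a i j * (z i - z j))"
proof -
  have e: "laplacian p a i j * z j = (if i = j then (\<Sum>l<p. a i l) * z i else 0) - a i j * z j" for j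
    unfolding laplacian_def by (auto simp: algebra_simps)
  have "(\<Sum>j<p. laplacian p a i j * z j) = (\<Sum>j<p. (if i = j then (\<Sum>l<p. a i l) * z i else 0)) - (\<Sum>j<p. a i j * z j)"
    unfolding e by (simp add: sum_subtractf)
  also have "\<dots> = (\<Sum>l<p. a i l) * z i - (\<Sum>j<p. a i j * z j)" using assms by simp
  also have "\<dots> = (\<Sum>j<p. a i j * (z i - z j))"
    by (simp add: sum_distrib_right sum_subtractf right_diff_distrib)
  finally show ?thesis .
qed

lemma lap_rowsum: "i < p \<Longrightarrow> (\<Sum>j<p. laplacian p a i j) = 0"
  using lap_row[of i p a "\<lambda>_. 1"] by simp

lemma lap_colsum:
  assumes "balanced p a" "j < p"
  shows "(\<Sum>i<p. laplacian p a i j) = 0"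
proof -
  have "(\<Sum>i<p. laplacian p a i j) = (\<Sum>i<p. if i = j then (\<Sum>l<p. a i l) else 0) - (\<Sum>i<p. a i j)"
    unfolding laplacian_def by (simp add: sum_subtractf)
  also have "\<dots> = (\<Sum>l<p. a j l) - (\<Sum>i<p. a i j)" using assms(2) by simp
  finally show ?thesis using assms unfolding balanced_def by auto
qed

lemma lap_quad:
  assumes "balanced p a"
  shows "(\<Sum>i<p. z i * (\<Sum>j<p. laplacian p a i j * z j)) =
         (\<Sum>i<p. \<Sum>j<p. a i j * (z i - z j)^2) / 2"
proof -
  have b: "(\<Sum>i<p. a j i) = (\<Sum>i<p. a i j)" if "j < p" for j using assms that unfolding balanced_def by auto
  have "(\<Sum>i<p. z i * (\<Sum>j<p. laplacian p a i j * z j)) = (\<Sum>i<p. \<Sum>j<p. a i j * (z i * z i - z i * z j))"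
  proof (rule sum.cong)
    fix i assume "i \<in> {..<p}"
    then have "(\<Sum>j<p. laplacian p a i j * z j) = (\<Sum>j<p. a i j * (z i - z j))" by (simp add: lap_row)
    then show "z i * (\<Sum>j<p. laplacian p a i j * z j) = (\<Sum>j<p. a i j * (z i * z i - z i * z j))"
      by (simp add: sum_distrib_left algebra_simps)
  qed simp
  also have "\<dots> = (\<Sum>i<p. \<Sum>j<p. a i j * z i * z i) - (\<Sum>i<p. \<Sum>j<p. a i j * z i * z j)"
    by (simp add: sum_subtractf algebra_simps)
  finally have L: "(\<Sum>i<p. z i * (\<Sum>j<p. laplacian p a i j * z j)) = (\<Sum>i<p. \<Sum>j<p. a i j * z i * z i) - (\<Sum>i<p. \<Sum>j<p. a i j * z i * z j)" .
  have sw: "(\<Sum>i<p. \<Sum>j<p. a i j * z j * z j) = (\<Sum>i<p. \<Sum>j<p. a i j * z i * z i)"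
  proof -
    have "(\<Sum>i<p. \<Sum>j<p. a i j * z j * z j) = (\<Sum>j<p. \<Sum>i<p. a i j * z j * z j)" by (rule sum.swap)
    also have "\<dots> = (\<Sum>j<p. (\<Sum>i<p. a i j) * z j * z j)" by (simp add: sum_distrib_right)
    also have "\<dots> = (\<Sum>j<p. (\<Sum>i<p. a j i) * z j * z j)" by (rule sum.cong) (auto simp: b)
    also have "\<dots> = (\<Sum>i<p. \<Sum>j<p. a i j * z i * z i)" by (simp add: sum_distrib_right)
    finally show ?thesis .
  qed
  have "(\<Sum>i<p. \<Sum>j<p. a i j * (z i - z j)^2) = (\<Sum>i<p. \<Sum>j<p. a i j * z i * z i) + (\<Sum>i<p. \<Sum>j<p. a i j * z j * z j) - 2 * (\<Sum>i<p. \<Sum>j<p. a i j * z i * z j)"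
    by (simp add: power2_eq_square algebra_simps sum.distrib sum_subtractf sum_distrib_left)
  then show ?thesis using L sw by simp
qed

locale sys =
  fixes n m p :: nat
    and epos eneg :: "nat \<Rightarrow> nat"
    and tx tmu txi tth tph q r d ybar :: "nat \<Rightarrow> real"
    and h f g :: "nat \<Rightarrow> real \<Rightarrow> real"
    and a :: "nat \<Rightarrow> nat \<Rightarrow> real"
    and xb mub xib thb phb :: "nat \<Rightarrow> real"
    and x \<mu> \<xi> \<theta> \<phi> :: "real \<Rightarrow> nat \<Rightarrow> real"
    and B L :: "nat \<Rightarrow> nat \<Rightarrow> real" and ub :: "nat \<Rightarrow> real"
  assumes B_def: "B = incidence epos eneg"
      and L_def: "L = laplacian p a"
      and ub_def: "ub = ubar n p q r d"
  assumes graph: "graph_ok n m epos eneg" and conn: "graph_connected n m epos eneg"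
    and p_ge: "1 \<le> p" and p_le: "p \<le> n"
    and tx_pos: "\<forall>i<n. tx i > 0" and tmu_pos: "\<forall>k<m. tmu k > 0"
    and txi_pos: "\<forall>k<m. txi k > 0" and tth_pos: "\<forall>i<p. tth i > 0"
    and tph_pos: "\<forall>i<p. tph i > 0"
    and h_C1: "\<forall>i<n. C1_strict_incr (h i)"
    and q_pos: "\<forall>i<p. q i > 0"
    and digraph: "weighted_digraph p a" and bal: "balanced p a"
    and sconn: "strongly_connected p a"
    and f_C1: "\<forall>k<m. C1_strict_incr (f k)"
    and g_C1: "\<forall>i<p. C1_strict_incr (g i)"
    and equil: "(\<forall>i<n. rhs_x m p B f g d mub thb i = 0) \<and>
                (\<forall>k<m. rhs_mu n B h f ybar xb mub xib k = 0) \<and>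
                (\<forall>k<m. rhs_xi f mub xib k = 0) \<and>
                (\<forall>i<p. rhs_theta h g ybar xb thb phb i = 0) \<and>
                (\<forall>i<p. rhs_phi p L q r g thb phb i = 0)"
    and sol: "\<forall>t\<ge>0.
        (\<forall>i<n. ((\<lambda>s. x s i) has_real_derivative
            rhs_x m p B f g d (\<mu> t) (\<theta> t) i / tx i) (at t within {0..})) \<and>
        (\<forall>k<m. ((\<lambda>s. \<mu> s k) has_real_derivative
            rhs_mu n B h f ybar (x t) (\<mu> t) (\<xi> t) k / tmu k) (at t within {0..})) \<and>
        (\<forall>k<m. ((\<lambda>s. \<xi> s k) has_real_derivative
            rhs_xi f (\<mu> t) (\<xi> t) k / txi k) (at t within {0..})) \<and>
        (\<forall>i<p. ((\<lambda>s. \<theta> s i) has_real_derivative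
            rhs_theta h g ybar (x t) (\<theta> t) (\<phi> t) i / tth i) (at t within {0..})) \<and>
        (\<forall>i<p. ((\<lambda>s. \<phi> s i) has_real_derivative
            rhs_phi p L q r g (\<theta> t) (\<phi> t) i / tph i) (at t within {0..}))"
begin

definition EQ :: "(nat \<Rightarrow> real) \<Rightarrow> (nat \<Rightarrow> real) \<Rightarrow> (nat \<Rightarrow> real) \<Rightarrow> (nat \<Rightarrow> real) \<Rightarrow> (nat \<Rightarrow> real) \<Rightarrow> bool" where
  "EQ xs ms xis ths phs \<longleftrightarrow>
     (\<forall>i<n. rhs_x m p B f g d ms ths i = 0) \<and>
     (\<forall>k<m. rhs_mu n B h f ybar xs ms xis k = 0) \<and>
     (\<forall>k<m. rhs_xi f ms xis k = 0) \<and>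
     (\<forall>i<p. rhs_theta h g ybar xs ths phs i = 0) \<and>
     (\<forall>i<p. rhs_phi p L q r g ths phs i = 0)"

lemma EQ_b: "EQ xb mub xib thb phb" using equil unfolding EQ_def by auto

lemma n_pos: "0 < n" using p_ge p_le by auto

lemma Bsum: "k < m \<Longrightarrow> (\<Sum>i<n. B i k * v i) = v (epos k) - v (eneg k)"
  unfolding B_def by (rule inc_sum[OF graph])

lemma Bcol: "k < m \<Longrightarrow> (\<Sum>i<n. B i k) = 0"
  unfolding B_def by (rule inc_colsum[OF graph])

lemma Emul_sum: "(\<Sum>i<n. Emul p u i) = (\<Sum>i<p. u i)"
proof -
  have "(\<Sum>i<n. Emul p u i) = (\<Sum>i\<in>{..<n} \<inter> {i. i < p}. u i)"
    unfolding Emul_def by (simp add: sum.inter_restrict)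
  also have "{..<n} \<inter> {i. i < p} = {..<p}" using p_le by auto
  finally show ?thesis .
qed

lemma Bdouble: "(\<Sum>i<n. \<Sum>k<m. B i k * w k) = 0"
proof -
  have "(\<Sum>i<n. \<Sum>k<m. B i k * w k) = (\<Sum>k<m. (\<Sum>i<n. B i k) * w k)"
    by (subst sum.swap) (simp add: sum_distrib_right)
  also have "\<dots> = 0" by (simp add: Bcol)
  finally show ?thesis .
qed

lemma S1_pos: "(\<Sum>j<p. 1 / q j) > 0"
proof -
  have "(\<Sum>j<p. 1 / q j) \<ge> 1 / q 0" 
    by (rule member_le_sum) (use p_ge q_pos in \<open>auto intro: less_imp_le\<close>)
  moreover have "1 / q 0 > 0" using q_pos p_ge by auto
  ultimately show ?thesis by linarith
qed

lemma L_colsum: "j < p \<Longrightarrow> (\<Sum>i<p. L i j) = 0"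
  unfolding L_def by (rule lap_colsum[OF bal])

lemma L_rowsum: "i < p \<Longrightarrow> (\<Sum>j<p. L i j) = 0"
  unfolding L_def by (rule lap_rowsum)

lemma L_quad: "(\<Sum>i<p. z i * (\<Sum>j<p. L i j * z j)) = (\<Sum>i<p. \<Sum>j<p. a i j * (z i - z j)^2) / 2"
  unfolding L_def by (rule lap_quad[OF bal])

lemma quad_nonneg: "(\<Sum>i<p. \<Sum>j<p. a i j * (z i - z j)^2) \<ge> 0"
  using digraph unfolding weighted_digraph_def by (auto intro!: sum_nonneg)

lemma L_ker:
  assumes "\<forall>i<p. (\<Sum>j<p. L i j * w j) = 0" "i < p"
  shows "w i = w 0"
proof -
  define Fq where "Fq i j = a i j * (w i - w j)^2" for i j
  have s0: "(\<Sum>i<p. \<Sum>j<p. Fq i j) = 0" using L_quad[of w] assms(1) unfolding Fq_def by simp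
  have nn: "\<forall>i<p. \<forall>j<p. Fq i j \<ge> 0"
    using digraph unfolding weighted_digraph_def Fq_def by auto
  have "\<forall>i\<in>{..<p}. (\<Sum>j<p. Fq i j) = 0"
  proof (rule iffD1[OF sum_nonneg_eq_0_iff s0])
    fix i assume "i \<in> {..<p}"
    then show "0 \<le> (\<Sum>j<p. Fq i j)" using nn by (intro sum_nonneg) auto
  qed simp
  have z: "Fq i j = 0" if ij: "i < p" "j < p" for i j
  proof -
    have "(\<Sum>j<p. Fq i j) = 0" using \<open>\<forall>i\<in>{..<p}. (\<Sum>j<p. Fq i j) = 0\<close> ij by blast
    moreover have "\<forall>j\<in>{..<p}. Fq i j \<ge> 0" using nn ij by blast
    ultimately have "\<forall>j\<in>{..<p}. Fq i j = 0" using sum_nonneg_eq_0_iff[of "{..<p}" "Fq i"] by blast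
    then show ?thesis using ij by blast
  qed
  have w: "w i = w j" if ij: "i < p" "j < p" "a i j > 0" for i j
  proof -
    have "a i j * (w i - w j)^2 = 0" using z[OF ij(1,2)] unfolding Fq_def .
    then have "(w i - w j)^2 = 0" using ij(3) by simp
    then show ?thesis by simp
  qed
  show ?thesis
    by (rule sconn_static[OF sconn _ assms(2)]) (use w p_ge in auto)
qed

lemma eq_char:
  assumes "EQ xs ms xis ths phs"
  shows "(\<forall>i<n. h i (xs i) = ybar i) \<and> (\<forall>k<m. xis k = f k (ms k)) \<and>
         (\<forall>i<p. g i (ths i) = ub i) \<and> (\<forall>i<p. phs i = ub i) \<and>
         (\<forall>i<p. (\<Sum>j<p. L i j * (q j * phs j + r j)) = 0) \<and>
         (\<forall>i<n. (\<Sum>k<m. B i k * f k (ms k)) = Emul p ub i - d i)"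
proof -
  have E1: "\<forall>i<n. rhs_x m p B f g d ms ths i = 0" and E2: "\<forall>k<m. rhs_mu n B h f ybar xs ms xis k = 0"
    and E3: "\<forall>k<m. rhs_xi f ms xis k = 0" and E4: "\<forall>i<p. rhs_theta h g ybar xs ths phs i = 0"
    and E5: "\<forall>i<p. rhs_phi p L q r g ths phs i = 0" using assms unfolding EQ_def by simp_all
  have xi: "\<forall>k<m. xis k = f k (ms k)" using E3 unfolding rhs_xi_def by auto
  define w where "w i = h i (xs i) - ybar i" for i
  have "\<forall>k<m. w (epos k) = w (eneg k)"
  proof (intro allI impI)
    fix k assume k: "k < m"
    have "rhs_mu n B h f ybar xs ms xis k = 0" using E2 k by blast
    then have "(\<Sum>i<n. B i k * w i) = 0" using k xi unfolding w_def rhs_mu_def by simp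
    then show "w (epos k) = w (eneg k)" using Bsum[OF k] by simp
  qed
  then have wc: "\<forall>i<n. w i = w 0"
  proof (intro allI impI)
    fix i assume "i < n"
    from conn_static[OF conn \<open>\<forall>k<m. w (epos k) = w (eneg k)\<close> this n_pos] show "w i = w 0" .
  qed
  define c where "c = w 0"
  define W where "W j = q j * phs j + r j" for j
  have th: "g i (ths i) - phs i = - c" if "i < p" for i
  proof -
    have "i < n" using that p_le by simp
    then have "w i = c" using wc unfolding c_def by blast
    moreover have "rhs_theta h g ybar xs ths phs i = 0" using E4 that by blast
    ultimately show ?thesis unfolding rhs_theta_def w_def by simp
  qed
  have ph: "g i (ths i) - phs i = q i * (\<Sum>j<p. L i j * W j)" if "i < p" for i
  proof -
    have "rhs_phi p L q r g ths phs i = 0" using E5 that by blast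
    then show ?thesis unfolding rhs_phi_def W_def by simp
  qed
  have LW: "(\<Sum>j<p. L i j * W j) = - c / q i" if "i < p" for i
  proof -
    have "q i * (\<Sum>j<p. L i j * W j) = - c" using th[OF that] ph[OF that] by simp
    moreover have "q i \<noteq> 0" using q_pos that by force
    ultimately show ?thesis by (metis minus_divide_left nonzero_mult_div_cancel_left)
  qed
  have "(\<Sum>i<p. \<Sum>j<p. L i j * W j) = (\<Sum>j<p. (\<Sum>i<p. L i j) * W j)"
    by (subst sum.swap) (simp add: sum_distrib_right)
  also have "\<dots> = 0" by (simp add: L_colsum)
  finally have "(\<Sum>i<p. - c / q i) = 0" using LW by simp
  then have "- c * (\<Sum>i<p. 1 / q i) = 0" by (simp add: sum_distrib_left)
  then have c0: "c = 0" using S1_pos by simp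
  have LW0: "\<forall>i<p. (\<Sum>j<p. L i j * W j) = 0" using LW c0 by simp
  have Wc: "W i = W 0" if "i < p" for i using L_ker[OF LW0 that] .
  have gph: "g i (ths i) = phs i" if "i < p" for i using th[OF that] c0 by simp
  have phs_eq: "phs i = (W 0 - r i) / q i" if "i < p" for i
  proof -
    have "q i > 0" using q_pos that by blast
    then show ?thesis using Wc[OF that] unfolding W_def by (simp add: field_simps)
  qed
  have "(\<Sum>i<n. rhs_x m p B f g d ms ths i) = 0" using E1 by simp
  then have "(\<Sum>i<n. Emul p (\<lambda>j. g j (ths j)) i) - (\<Sum>i<n. d i) = 0"
    unfolding rhs_x_def by (simp add: sum.distrib sum_subtractf Bdouble)
  then have sd: "(\<Sum>i<p. g i (ths i)) = (\<Sum>i<n. d i)" by (simp add: Emul_sum)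
  have "(\<Sum>i<p. g i (ths i)) = (\<Sum>i<p. (W 0 - r i) / q i)" by (rule sum.cong) (auto simp: gph phs_eq)
  also have "\<dots> = W 0 * (\<Sum>i<p. 1 / q i) - (\<Sum>i<p. r i / q i)"
    by (simp add: sum_distrib_left diff_divide_distrib sum_subtractf)
  finally have "W 0 * (\<Sum>i<p. 1 / q i) = (\<Sum>i<n. d i) + (\<Sum>i<p. r i / q i)" using sd by simp
  moreover have "(\<Sum>l<n. d l + (if l < p then r l / q l else 0)) = (\<Sum>i<n. d i) + (\<Sum>i<p. r i / q i)"
    using Emul_sum[of "\<lambda>l. r l / q l"] unfolding Emul_def by (simp add: sum.distrib)
  ultimately have k0: "W 0 = kappa n p q r d i" for i
    unfolding kappa_def using S1_pos by (simp add: field_simps)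
  have ubi: "phs i = ub i" if "i < p" for i
    using phs_eq[OF that] k0 unfolding ub_def ubar_def by simp
  have "\<forall>i<n. (\<Sum>k<m. B i k * f k (ms k)) = Emul p ub i - d i"
  proof (intro allI impI)
    fix i assume i: "i < n"
    have e0: "- (\<Sum>k<m. B i k * f k (ms k)) + Emul p (\<lambda>j. g j (ths j)) i - d i = 0"
      using E1 i unfolding rhs_x_def by blast
    have e1: "Emul p (\<lambda>j. g j (ths j)) i = Emul p ub i" unfolding Emul_def using gph ubi by auto
    show "(\<Sum>k<m. B i k * f k (ms k)) = Emul p ub i - d i" using e0 e1 by linarith
  qed
  moreover have "\<forall>i<n. h i (xs i) = ybar i"
  proof (intro allI impI)
    fix i assume i: "i < n"
    have "w i = 0" using wc[rule_format, OF i] c0 unfolding c_def by simp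
    then show "h i (xs i) = ybar i" unfolding w_def by simp
  qed
  moreover have "\<forall>i<p. g i (ths i) = ub i" using gph ubi by simp
  moreover have "\<forall>i<p. phs i = ub i" using ubi by simp
  moreover have "\<forall>i<p. (\<Sum>j<p. L i j * (q j * phs j + r j)) = 0" using LW0 unfolding W_def by simp
  ultimately show ?thesis using xi by blast
qed

end

context sys begin

lemma dx: "i < n \<Longrightarrow> deriv0 (\<lambda>s. x s i) (\<lambda>t. rhs_x m p B f g d (\<mu> t) (\<theta> t) i / tx i)"
  using sol unfolding deriv0_def by blast
lemma dmu: "k < m \<Longrightarrow> deriv0 (\<lambda>s. \<mu> s k) (\<lambda>t. rhs_mu n B h f ybar (x t) (\<mu> t) (\<xi> t) k / tmu k)"
  using sol unfolding deriv0_def by blast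
lemma dxi: "k < m \<Longrightarrow> deriv0 (\<lambda>s. \<xi> s k) (\<lambda>t. rhs_xi f (\<mu> t) (\<xi> t) k / txi k)"
  using sol unfolding deriv0_def by blast
lemma dth: "i < p \<Longrightarrow> deriv0 (\<lambda>s. \<theta> s i) (\<lambda>t. rhs_theta h g ybar (x t) (\<theta> t) (\<phi> t) i / tth i)"
  using sol unfolding deriv0_def by blast
lemma dph: "i < p \<Longrightarrow> deriv0 (\<lambda>s. \<phi> s i) (\<lambda>t. rhs_phi p L q r g (\<theta> t) (\<phi> t) i / tph i)"
  using sol unfolding deriv0_def by blast

lemma potl_h: "i < n \<Longrightarrow> potl (h i)" using h_C1 C1_potl by blast
lemma potl_f: "k < m \<Longrightarrow> potl (f k)" using f_C1 C1_potl by blast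
lemma potl_g: "i < p \<Longrightarrow> potl (g i)" using g_C1 C1_potl by blast

definition V :: "(nat \<Rightarrow> real) \<Rightarrow> (nat \<Rightarrow> real) \<Rightarrow> (nat \<Rightarrow> real) \<Rightarrow> (nat \<Rightarrow> real) \<Rightarrow> (nat \<Rightarrow> real) \<Rightarrow> real \<Rightarrow> real" where
  "V xs ms xis ths phs t =
     (\<Sum>i<n. tx i * pot (h i) (xs i) (x t i)) + (\<Sum>k<m. tmu k * pot (f k) (ms k) (\<mu> t k)) +
     (\<Sum>k<m. txi k * (\<xi> t k - xis k)^2 / 2) + (\<Sum>i<p. tth i * pot (g i) (ths i) (\<theta> t i)) +
     (\<Sum>i<p. tph i * (\<phi> t i - phs i)^2 / 2)"

definition VD :: "(nat \<Rightarrow> real) \<Rightarrow> (nat \<Rightarrow> real) \<Rightarrow> (nat \<Rightarrow> real) \<Rightarrow> (nat \<Rightarrow> real) \<Rightarrow> (nat \<Rightarrow> real) \<Rightarrow> real \<Rightarrow> real" where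
  "VD xs ms xis ths phs t =
     (\<Sum>i<n. (h i (x t i) - h i (xs i)) * rhs_x m p B f g d (\<mu> t) (\<theta> t) i) +
     (\<Sum>k<m. (f k (\<mu> t k) - f k (ms k)) * rhs_mu n B h f ybar (x t) (\<mu> t) (\<xi> t) k) +
     (\<Sum>k<m. (\<xi> t k - xis k) * rhs_xi f (\<mu> t) (\<xi> t) k) +
     (\<Sum>i<p. (g i (\<theta> t i) - g i (ths i)) * rhs_theta h g ybar (x t) (\<theta> t) (\<phi> t) i) +
     (\<Sum>i<p. (\<phi> t i - phs i) * rhs_phi p L q r g (\<theta> t) (\<phi> t) i)"

lemma der_eq: "(F has_field_derivative D) G \<Longrightarrow> D = E \<Longrightarrow> (F has_field_derivative E) G" by simp

lemma V_deriv: "deriv0 (V xs ms xis ths phs) (VD xs ms xis ths phs)"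
  unfolding deriv0_def
proof (intro allI impI)
  fix t :: real assume t: "t \<ge> 0"
  let ?F = "at t within {0..}"
  have d1: "((\<lambda>s. \<Sum>i<n. tx i * pot (h i) (xs i) (x s i)) has_real_derivative
      (\<Sum>i<n. (h i (x t i) - h i (xs i)) * rhs_x m p B f g d (\<mu> t) (\<theta> t) i)) ?F"
  proof (rule DERIV_sum)
    fix i assume "i \<in> {..<n}"
    then have i: "i < n" by simp
    have dd: "((\<lambda>s. pot (h i) (xs i) (x s i)) has_real_derivative
        (h i (x t i) - h i (xs i)) * (rhs_x m p B f g d (\<mu> t) (\<theta> t) i / tx i)) ?F"
      by (rule DERIV_chain2[OF potl.G_der[OF potl_h[OF i]]]) (use dx[OF i] t in \<open>auto simp: deriv0_def\<close>)
    show "((\<lambda>s. tx i * pot (h i) (xs i) (x s i)) has_real_derivative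
      (h i (x t i) - h i (xs i)) * rhs_x m p B f g d (\<mu> t) (\<theta> t) i) ?F"
      by (rule der_eq[OF DERIV_cmult[OF dd, of "tx i"]]) (use tx_pos[rule_format, of i] i in simp)
  qed
  have d2: "((\<lambda>s. \<Sum>k<m. tmu k * pot (f k) (ms k) (\<mu> s k)) has_real_derivative
      (\<Sum>k<m. (f k (\<mu> t k) - f k (ms k)) * rhs_mu n B h f ybar (x t) (\<mu> t) (\<xi> t) k)) ?F"
  proof (rule DERIV_sum)
    fix k assume "k \<in> {..<m}"
    then have k: "k < m" by simp
    have dd: "((\<lambda>s. pot (f k) (ms k) (\<mu> s k)) has_real_derivative
        (f k (\<mu> t k) - f k (ms k)) * (rhs_mu n B h f ybar (x t) (\<mu> t) (\<xi> t) k / tmu k)) ?F"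
      by (rule DERIV_chain2[OF potl.G_der[OF potl_f[OF k]]]) (use dmu[OF k] t in \<open>auto simp: deriv0_def\<close>)
    show "((\<lambda>s. tmu k * pot (f k) (ms k) (\<mu> s k)) has_real_derivative
      (f k (\<mu> t k) - f k (ms k)) * rhs_mu n B h f ybar (x t) (\<mu> t) (\<xi> t) k) ?F"
      by (rule der_eq[OF DERIV_cmult[OF dd, of "tmu k"]]) (use tmu_pos[rule_format, of k] k in simp)
  qed
  have d3: "((\<lambda>s. \<Sum>k<m. txi k * (\<xi> s k - xis k)^2 / 2) has_real_derivative
      (\<Sum>k<m. (\<xi> t k - xis k) * rhs_xi f (\<mu> t) (\<xi> t) k)) ?F"
  proof (rule DERIV_sum)
    fix k assume "k \<in> {..<m}"
    then have k: "k < m" by simp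
    have "((\<lambda>s. \<xi> s k) has_real_derivative rhs_xi f (\<mu> t) (\<xi> t) k / txi k) ?F"
      using dxi[OF k] t by (auto simp: deriv0_def)
    then have dd2: "((\<lambda>s. txi k * (\<xi> s k - xis k)^2 / 2) has_real_derivative
       txi k * (2 * (\<xi> t k - xis k) * (rhs_xi f (\<mu> t) (\<xi> t) k / txi k)) / 2) ?F"
      by (auto intro!: derivative_eq_intros simp: power2_eq_square)
    show "((\<lambda>s. txi k * (\<xi> s k - xis k)^2 / 2) has_real_derivative
       (\<xi> t k - xis k) * rhs_xi f (\<mu> t) (\<xi> t) k) ?F"
      by (rule der_eq[OF dd2]) (use txi_pos[rule_format, of k] k in simp)
  qed
  have d4: "((\<lambda>s. \<Sum>i<p. tth i * pot (g i) (ths i) (\<theta> s i)) has_real_derivative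
      (\<Sum>i<p. (g i (\<theta> t i) - g i (ths i)) * rhs_theta h g ybar (x t) (\<theta> t) (\<phi> t) i)) ?F"
  proof (rule DERIV_sum)
    fix i assume "i \<in> {..<p}"
    then have i: "i < p" by simp
    have dd: "((\<lambda>s. pot (g i) (ths i) (\<theta> s i)) has_real_derivative
        (g i (\<theta> t i) - g i (ths i)) * (rhs_theta h g ybar (x t) (\<theta> t) (\<phi> t) i / tth i)) ?F"
      by (rule DERIV_chain2[OF potl.G_der[OF potl_g[OF i]]]) (use dth[OF i] t in \<open>auto simp: deriv0_def\<close>)
    show "((\<lambda>s. tth i * pot (g i) (ths i) (\<theta> s i)) has_real_derivative
      (g i (\<theta> t i) - g i (ths i)) * rhs_theta h g ybar (x t) (\<theta> t) (\<phi> t) i) ?F"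
      by (rule der_eq[OF DERIV_cmult[OF dd, of "tth i"]]) (use tth_pos[rule_format, of i] i in simp)
  qed
  have d5: "((\<lambda>s. \<Sum>i<p. tph i * (\<phi> s i - phs i)^2 / 2) has_real_derivative
      (\<Sum>i<p. (\<phi> t i - phs i) * rhs_phi p L q r g (\<theta> t) (\<phi> t) i)) ?F"
  proof (rule DERIV_sum)
    fix i assume "i \<in> {..<p}"
    then have i: "i < p" by simp
    have "((\<lambda>s. \<phi> s i) has_real_derivative rhs_phi p L q r g (\<theta> t) (\<phi> t) i / tph i) ?F"
      using dph[OF i] t by (auto simp: deriv0_def)
    then have dd2: "((\<lambda>s. tph i * (\<phi> s i - phs i)^2 / 2) has_real_derivative
       tph i * (2 * (\<phi> t i - phs i) * (rhs_phi p L q r g (\<theta> t) (\<phi> t) i / tph i)) / 2) ?F"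
      by (auto intro!: derivative_eq_intros simp: power2_eq_square)
    show "((\<lambda>s. tph i * (\<phi> s i - phs i)^2 / 2) has_real_derivative
       (\<phi> t i - phs i) * rhs_phi p L q r g (\<theta> t) (\<phi> t) i) ?F"
      by (rule der_eq[OF dd2]) (use tph_pos[rule_format, of i] i in simp)
  qed
  have "((\<lambda>s. V xs ms xis ths phs s) has_real_derivative VD xs ms xis ths phs t) ?F"
    unfolding V_def VD_def by (intro DERIV_add d1 d2 d3 d4 d5)
  then show "(V xs ms xis ths phs has_real_derivative VD xs ms xis ths phs t) ?F" by simp
qed

definition zz :: "real \<Rightarrow> nat \<Rightarrow> real" where "zz t i = q i * (\<phi> t i - ub i)"

definition Wf :: "real \<Rightarrow> real" where
  "Wf t = (\<Sum>k<m. (f k (\<mu> t k) - \<xi> t k)^2) + (\<Sum>i<p. (g i (\<theta> t i) - \<phi> t i)^2) +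
          (\<Sum>i<p. \<Sum>j<p. a i j * (zz t i - zz t j)^2) / 2"

lemma Emul_mult: "(\<Sum>i<n. A i * Emul p v i) = (\<Sum>i<p. A i * v i)"
proof -
  have "(\<Sum>i<n. A i * Emul p v i) = (\<Sum>i<n. Emul p (\<lambda>i. A i * v i) i)"
    by (rule sum.cong) (auto simp: Emul_def)
  then show ?thesis by (simp add: Emul_sum)
qed

lemma VD_eq:
  assumes eq: "EQ xs ms xis ths phs"
  shows "VD xs ms xis ths phs t = - Wf t"
proof -
  note ch = eq_char[OF eq]
  define A where "A i = h i (x t i) - ybar i" for i
  define lam where "lam k = f k (\<mu> t k)" for k
  define ls where "ls k = f k (ms k)" for k
  define u where "u i = g i (\<theta> t i)" for i
  define ph where "ph i = \<phi> t i" for i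
  define xx where "xx k = \<xi> t k" for k
  define z where "z i = zz t i" for i
  define S where "S k = (\<Sum>i<n. B i k * A i)" for k
  define Lz where "Lz i = (\<Sum>j<p. L i j * z j)" for i
  have hxs: "h i (xs i) = ybar i" if "i < n" for i using ch that by blast
  have xis: "xis k = ls k" if "k < m" for k using ch that unfolding ls_def by blast
  have gths: "g i (ths i) = ub i" if "i < p" for i using ch that by blast
  have phs: "phs i = ub i" if "i < p" for i using ch that by blast
  have Lub: "(\<Sum>j<p. L i j * (q j * ub j + r j)) = 0" if "i < p" for i
    using ch that phs by (smt (verit) lessThan_iff sum.cong)
  have dB: "d i = Emul p ub i - (\<Sum>k<m. B i k * ls k)" if "i < n" for i using ch that unfolding ls_def by auto
  have rx: "rhs_x m p B f g d (\<mu> t) (\<theta> t) i = - (\<Sum>k<m. B i k * (lam k - ls k)) + Emul p (\<lambda>j. u j - ub j) i"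
    if "i < n" for i
    unfolding rhs_x_def dB[OF that] by (auto simp: Emul_def lam_def u_def sum_subtractf right_diff_distrib)
  have T1: "(\<Sum>i<n. (h i (x t i) - h i (xs i)) * rhs_x m p B f g d (\<mu> t) (\<theta> t) i) =
     - (\<Sum>k<m. (lam k - ls k) * S k) + (\<Sum>i<p. A i * (u i - ub i))"
  proof -
    have "(\<Sum>i<n. (h i (x t i) - h i (xs i)) * rhs_x m p B f g d (\<mu> t) (\<theta> t) i) =
          (\<Sum>i<n. - (\<Sum>k<m. A i * B i k * (lam k - ls k)) + A i * Emul p (\<lambda>j. u j - ub j) i)"
      by (rule sum.cong) (auto simp: rx hxs A_def sum_distrib_left algebra_simps)
    also have "\<dots> = - (\<Sum>i<n. \<Sum>k<m. A i * B i k * (lam k - ls k)) + (\<Sum>i<p. A i * (u i - ub i))"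
      using Emul_mult[of A "\<lambda>j. u j - ub j"] by (simp add: sum_subtractf sum.distrib)
    also have "(\<Sum>i<n. \<Sum>k<m. A i * B i k * (lam k - ls k)) = (\<Sum>k<m. (lam k - ls k) * S k)"
      unfolding S_def by (subst sum.swap) (simp add: sum_distrib_left algebra_simps)
    finally show ?thesis .
  qed
  have T23: "(\<Sum>k<m. (f k (\<mu> t k) - f k (ms k)) * rhs_mu n B h f ybar (x t) (\<mu> t) (\<xi> t) k) +
     (\<Sum>k<m. (\<xi> t k - xis k) * rhs_xi f (\<mu> t) (\<xi> t) k) =
     (\<Sum>k<m. (lam k - ls k) * S k - (lam k - xx k)^2)"
    unfolding sum.distrib[symmetric]
    by (rule sum.cong) (auto simp: rhs_mu_def rhs_xi_def xis S_def A_def lam_def ls_def xx_def power2_eq_square algebra_simps)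
  have LL: "(\<Sum>j<p. L i j * (q j * ph j + r j)) = Lz i" if "i < p" for i
  proof -
    have "(\<Sum>j<p. L i j * (q j * ph j + r j)) = (\<Sum>j<p. L i j * z j + L i j * (q j * ub j + r j))"
      by (rule sum.cong) (auto simp: z_def zz_def ph_def algebra_simps)
    also have "\<dots> = Lz i" using Lub[OF that] unfolding Lz_def by (simp add: sum.distrib)
    finally show ?thesis .
  qed
  have T45: "(\<Sum>i<p. (g i (\<theta> t i) - g i (ths i)) * rhs_theta h g ybar (x t) (\<theta> t) (\<phi> t) i) +
     (\<Sum>i<p. (\<phi> t i - phs i) * rhs_phi p L q r g (\<theta> t) (\<phi> t) i) =
     (\<Sum>i<p. - ((u i - ub i) * A i) - (u i - ph i)^2 - z i * Lz i)"
    unfolding sum.distrib[symmetric]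
  proof (rule sum.cong)
    fix i assume "i \<in> {..<p}"
    then have i: "i < p" by simp
    have e1: "rhs_phi p L q r g (\<theta> t) (\<phi> t) i = u i - ph i - q i * Lz i"
      unfolding rhs_phi_def LL[OF i, symmetric] u_def ph_def by simp
    show "(g i (\<theta> t i) - g i (ths i)) * rhs_theta h g ybar (x t) (\<theta> t) (\<phi> t) i +
          (\<phi> t i - phs i) * rhs_phi p L q r g (\<theta> t) (\<phi> t) i =
          - ((u i - ub i) * A i) - (u i - ph i)^2 - z i * Lz i"
      unfolding e1 using gths[OF i] phs[OF i]
      by (simp add: rhs_theta_def u_def ph_def A_def z_def zz_def power2_eq_square algebra_simps)
  qed simp
  have "VD xs ms xis ths phs t = - (\<Sum>k<m. (lam k - ls k) * S k) + (\<Sum>i<p. A i * (u i - ub i)) +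
     (\<Sum>k<m. (lam k - ls k) * S k - (lam k - xx k)^2) + (\<Sum>i<p. - ((u i - ub i) * A i) - (u i - ph i)^2 - z i * Lz i)"
    unfolding VD_def T1[symmetric] T23[symmetric] T45[symmetric] by simp
  also have "\<dots> = - (\<Sum>k<m. (lam k - xx k)^2) - (\<Sum>i<p. (u i - ph i)^2) - (\<Sum>i<p. z i * Lz i)"
    by (simp add: sum.distrib sum_subtractf algebra_simps)
  also have "(\<Sum>i<p. z i * Lz i) = (\<Sum>i<p. \<Sum>j<p. a i j * (z i - z j)^2) / 2"
    unfolding Lz_def by (rule L_quad)
  finally show ?thesis unfolding Wf_def lam_def xx_def u_def ph_def z_def by simp
qed

end

lemma bnd_const: "bnd (\<lambda>t. c)" unfolding bnd_def by auto

lemma bnd_add: "bnd y \<Longrightarrow> bnd z \<Longrightarrow> bnd (\<lambda>t. y t + z t)"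
  unfolding bnd_def
proof (elim exE)
  fix M1 M2 assume "\<forall>t\<ge>0. \<bar>y t\<bar> \<le> M1" "\<forall>t\<ge>0. \<bar>z t\<bar> \<le> M2"
  then show "\<exists>M. \<forall>t\<ge>0. \<bar>y t + z t\<bar> \<le> M" by (intro exI[of _ "M1 + M2"]) (smt (verit))
qed

lemma bnd_mult: "bnd y \<Longrightarrow> bnd z \<Longrightarrow> bnd (\<lambda>t. y t * z t)"
  unfolding bnd_def
proof (elim exE)
  fix M1 M2 assume "\<forall>t\<ge>0. \<bar>y t\<bar> \<le> M1" "\<forall>t\<ge>0. \<bar>z t\<bar> \<le> M2"
  then show "\<exists>M. \<forall>t\<ge>0. \<bar>y t * z t\<bar> \<le> M"
    by (intro exI[of _ "M1 * M2"]) (simp add: abs_mult mult_mono')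
qed

lemma bnd_neg: "bnd y \<Longrightarrow> bnd (\<lambda>t. - y t)" unfolding bnd_def by auto

lemma bnd_diff: "bnd y \<Longrightarrow> bnd z \<Longrightarrow> bnd (\<lambda>t. y t - z t)"
  using bnd_add[OF _ bnd_neg[of z]] by simp

lemma bnd_sum: "finite S \<Longrightarrow> (\<forall>i\<in>S. bnd (\<lambda>t. y t i)) \<Longrightarrow> bnd (\<lambda>t. \<Sum>i\<in>S. y t i)"
proof (induction S rule: finite_induct)
  case empty then show ?case using bnd_const[of 0] by simp
next
  case (insert x F) then show ?case using bnd_add[of "\<lambda>t. y t x"] by simp
qed

lemma sq_to0:
  fixes y :: "real \<Rightarrow> real"
  assumes "((\<lambda>t. (y t)^2) \<longlongrightarrow> 0) at_top"
  shows "(y \<longlongrightarrow> 0) at_top"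
proof (rule t0I)
  fix e :: real assume e: "e > 0"
  obtain T where T: "\<forall>t\<ge>T. \<bar>(y t)^2 - 0\<bar> < e^2" using t0D[OF assms, of "e^2"] e by auto
  have "\<forall>t\<ge>T. \<bar>y t - 0\<bar> < e"
  proof (intro allI impI)
    fix t assume "t \<ge> T"
    then have "(y t)^2 < e^2" using T by auto
    then have "\<bar>y t\<bar>^2 < e^2" by simp
    then show "\<bar>y t - 0\<bar> < e" using power2_less_imp_less[of "\<bar>y t\<bar>" e] e by simp
  qed
  then show "\<exists>T. \<forall>t\<ge>T. \<bar>y t - 0\<bar> < e" by blast
qed

lemma squeeze0:
  fixes y W :: "real \<Rightarrow> real"
  assumes "(W \<longlongrightarrow> 0) at_top" "\<forall>t\<ge>0. 0 \<le> y t \<and> y t \<le> W t"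
  shows "(y \<longlongrightarrow> 0) at_top"
proof (rule t0I)
  fix e :: real assume e: "e > 0"
  obtain T where T: "\<forall>t\<ge>T. \<bar>W t - 0\<bar> < e" using t0D[OF assms(1) e] by auto
  have "\<forall>t\<ge>max T 0. \<bar>y t - 0\<bar> < e" using T assms(2) by force
  then show "\<exists>T. \<forall>t\<ge>T. \<bar>y t - 0\<bar> < e" by blast
qed

lemma along:
  fixes y :: "real \<Rightarrow> real"
  assumes "(y \<longlongrightarrow> l) at_top" "strict_mono r"
  shows "((\<lambda>j. y (real (r j))) \<longlonglongrightarrow> l)"
proof -
  have "filterlim (\<lambda>j. real (r j)) at_top sequentially"
    using filterlim_compose[OF filterlim_real_sequentially filterlim_subseq[OF assms(2)]] by (simp add: o_def)
  then show ?thesis by (rule filterlim_compose[OF assms(1)])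
qed

lemma subseq_ex:
  fixes s :: "nat \<Rightarrow> nat \<Rightarrow> real"
  shows "(\<forall>k<m. \<exists>M. \<forall>j. \<bar>s j k\<bar> \<le> M) \<Longrightarrow> \<exists>r l. strict_mono r \<and> (\<forall>k<m. ((\<lambda>j. s (r j) k) \<longlonglongrightarrow> l k))"
proof (induction m)
  case 0 then show ?case by (intro exI[of _ id]) (auto simp: strict_mono_def)
next
  case (Suc m)
  have pre: "\<forall>k<m. \<exists>M. \<forall>j. \<bar>s j k\<bar> \<le> M" using Suc.prems by simp
  obtain r l where rl: "strict_mono r" "\<forall>k<m. ((\<lambda>j. s (r j) k) \<longlonglongrightarrow> l k)" using Suc.IH[OF pre] by blast
  obtain M where M: "\<forall>j. \<bar>s j m\<bar> \<le> M" using Suc.prems[rule_format, of m] by blast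
  obtain r2 where r2: "strict_mono r2" "monoseq (\<lambda>j. s (r (r2 j)) m)" using seq_monosub[of "\<lambda>j. s (r j) m"] by auto
  have "Bseq (\<lambda>j. s (r (r2 j)) m)" by (rule BseqI'[of _ M]) (use M in simp)
  then have "convergent (\<lambda>j. s (r (r2 j)) m)" using r2(2) Bseq_monoseq_convergent by blast
  then obtain c where c: "(\<lambda>j. s (r (r2 j)) m) \<longlonglongrightarrow> c" unfolding convergent_def by auto
  have "\<forall>k<Suc m. ((\<lambda>j. s (r (r2 j)) k) \<longlonglongrightarrow> (l(m := c)) k)"
  proof (intro allI impI)
    fix k assume "k < Suc m"
    then consider "k < m" | "k = m" by linarith
    then show "((\<lambda>j. s (r (r2 j)) k) \<longlonglongrightarrow> (l(m := c)) k)"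
    proof cases
      case 1
      then have "((\<lambda>j. s (r j) k) \<circ> r2) \<longlonglongrightarrow> l k" using rl(2) r2(1) LIMSEQ_subseq_LIMSEQ by blast
      then show ?thesis using 1 by (simp add: o_def)
    next
      case 2 then show ?thesis using c by simp
    qed
  qed
  moreover have "strict_mono (r \<circ> r2)" using rl(1) r2(1) by (simp add: strict_mono_o)
  ultimately show ?case by (intro exI[of _ "r \<circ> r2"] exI[of _ "l(m := c)"]) (simp add: o_def)
qed

lemma C1_sm: "C1_strict_incr F \<Longrightarrow> strict_mono F" unfolding C1_strict_incr_def by blast
lemma C1_cont: "C1_strict_incr F \<Longrightarrow> \<forall>x. isCont F x"
  unfolding C1_strict_incr_def using DERIV_isCont by blast
lemma C1_good: "C1_strict_incr F \<Longrightarrow> good y \<Longrightarrow> good (\<lambda>t. F (y t))"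
  unfolding C1_strict_incr_def using good_comp by blast

lemma abs_le_sq: "\<bar>y::real\<bar> \<le> 1 + y^2"
proof (cases "\<bar>y\<bar> \<le> 1")
  case True
  moreover have "y^2 \<ge> 0" by simp
  ultimately show ?thesis by linarith
next
  case False
  then have "\<bar>y\<bar> * 1 \<le> \<bar>y\<bar> * \<bar>y\<bar>" by (intro mult_left_mono) auto
  moreover have "\<bar>y\<bar> * \<bar>y\<bar> = y^2" by (simp add: power2_eq_square)
  ultimately show ?thesis by linarith
qed

context sys begin

lemma Wf_nonneg: "Wf t \<ge> 0"
  unfolding Wf_def using quad_nonneg[of "zz t"] by (intro add_nonneg_nonneg sum_nonneg) auto

lemma parts:
  shows "\<forall>i<n. tx i * pot (h i) (xs i) (x t i) \<ge> 0"
    and "\<forall>k<m. tmu k * pot (f k) (ms k) (\<mu> t k) \<ge> 0"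
    and "\<forall>k<m. txi k * (\<xi> t k - xis k)^2 / 2 \<ge> 0"
    and "\<forall>i<p. tth i * pot (g i) (ths i) (\<theta> t i) \<ge> 0"
    and "\<forall>i<p. tph i * (\<phi> t i - phs i)^2 / 2 \<ge> 0"
proof -
  show "\<forall>i<n. tx i * pot (h i) (xs i) (x t i) \<ge> 0"
  proof (intro allI impI)
    fix i assume i: "i < n"
    have "tx i > 0" using tx_pos i by blast
    moreover have "pot (h i) (xs i) (x t i) \<ge> 0" by (rule potl.G_nonneg[OF potl_h[OF i]])
    ultimately show "tx i * pot (h i) (xs i) (x t i) \<ge> 0" by simp
  qed
  show "\<forall>k<m. tmu k * pot (f k) (ms k) (\<mu> t k) \<ge> 0"
  proof (intro allI impI)
    fix k assume k: "k < m"
    have "tmu k > 0" using tmu_pos k by blast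
    moreover have "pot (f k) (ms k) (\<mu> t k) \<ge> 0" by (rule potl.G_nonneg[OF potl_f[OF k]])
    ultimately show "tmu k * pot (f k) (ms k) (\<mu> t k) \<ge> 0" by simp
  qed
  show "\<forall>k<m. txi k * (\<xi> t k - xis k)^2 / 2 \<ge> 0"
  proof (intro allI impI)
    fix k assume k: "k < m"
    have "txi k > 0" using txi_pos k by blast
    then show "txi k * (\<xi> t k - xis k)^2 / 2 \<ge> 0" by simp
  qed
  show "\<forall>i<p. tth i * pot (g i) (ths i) (\<theta> t i) \<ge> 0"
  proof (intro allI impI)
    fix i assume i: "i < p"
    have "tth i > 0" using tth_pos i by blast
    moreover have "pot (g i) (ths i) (\<theta> t i) \<ge> 0" by (rule potl.G_nonneg[OF potl_g[OF i]])
    ultimately show "tth i * pot (g i) (ths i) (\<theta> t i) \<ge> 0" by simp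
  qed
  show "\<forall>i<p. tph i * (\<phi> t i - phs i)^2 / 2 \<ge> 0"
  proof (intro allI impI)
    fix i assume i: "i < p"
    have "tph i > 0" using tph_pos i by blast
    then show "tph i * (\<phi> t i - phs i)^2 / 2 \<ge> 0" by simp
  qed
qed

lemma V_ge:
  shows "i < n \<Longrightarrow> tx i * pot (h i) (xs i) (x t i) \<le> V xs ms xis ths phs t"
    and "k < m \<Longrightarrow> tmu k * pot (f k) (ms k) (\<mu> t k) \<le> V xs ms xis ths phs t"
    and "k < m \<Longrightarrow> txi k * (\<xi> t k - xis k)^2 / 2 \<le> V xs ms xis ths phs t"
    and "i < p \<Longrightarrow> tth i * pot (g i) (ths i) (\<theta> t i) \<le> V xs ms xis ths phs t"
    and "i < p \<Longrightarrow> tph i * (\<phi> t i - phs i)^2 / 2 \<le> V xs ms xis ths phs t"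
proof -
  note P = parts
  have s1: "(\<Sum>i<n. tx i * pot (h i) (xs i) (x t i)) \<ge> 0" by (intro sum_nonneg) (use P(1) in blast)
  have s2: "(\<Sum>k<m. tmu k * pot (f k) (ms k) (\<mu> t k)) \<ge> 0" by (intro sum_nonneg) (use P(2) in blast)
  have s3: "(\<Sum>k<m. txi k * (\<xi> t k - xis k)^2 / 2) \<ge> 0" by (intro sum_nonneg) (use P(3) in blast)
  have s4: "(\<Sum>i<p. tth i * pot (g i) (ths i) (\<theta> t i)) \<ge> 0" by (intro sum_nonneg) (use P(4) in blast)
  have s5: "(\<Sum>i<p. tph i * (\<phi> t i - phs i)^2 / 2) \<ge> 0" by (intro sum_nonneg) (use P(5) in blast)
  show "i < n \<Longrightarrow> tx i * pot (h i) (xs i) (x t i) \<le> V xs ms xis ths phs t"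
  proof -
    assume i: "i < n"
    have "tx i * pot (h i) (xs i) (x t i) \<le> (\<Sum>i<n. tx i * pot (h i) (xs i) (x t i))"
      by (rule member_le_sum) (use i P(1) in auto)
    then show ?thesis unfolding V_def using s2 s3 s4 s5 by linarith
  qed
  show "k < m \<Longrightarrow> tmu k * pot (f k) (ms k) (\<mu> t k) \<le> V xs ms xis ths phs t"
  proof -
    assume k: "k < m"
    have "tmu k * pot (f k) (ms k) (\<mu> t k) \<le> (\<Sum>k<m. tmu k * pot (f k) (ms k) (\<mu> t k))"
      by (rule member_le_sum) (use k P(2) in auto)
    then show ?thesis unfolding V_def using s1 s3 s4 s5 by linarith
  qed
  show "k < m \<Longrightarrow> txi k * (\<xi> t k - xis k)^2 / 2 \<le> V xs ms xis ths phs t"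
  proof -
    assume k: "k < m"
    have "txi k * (\<xi> t k - xis k)^2 / 2 \<le> (\<Sum>k<m. txi k * (\<xi> t k - xis k)^2 / 2)"
      by (rule member_le_sum) (use k P(3) in auto)
    then show ?thesis unfolding V_def using s1 s2 s4 s5 by linarith
  qed
  show "i < p \<Longrightarrow> tth i * pot (g i) (ths i) (\<theta> t i) \<le> V xs ms xis ths phs t"
  proof -
    assume i: "i < p"
    have "tth i * pot (g i) (ths i) (\<theta> t i) \<le> (\<Sum>i<p. tth i * pot (g i) (ths i) (\<theta> t i))"
      by (rule member_le_sum) (use i P(4) in auto)
    then show ?thesis unfolding V_def using s1 s2 s3 s5 by linarith
  qed
  show "i < p \<Longrightarrow> tph i * (\<phi> t i - phs i)^2 / 2 \<le> V xs ms xis ths phs t"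
  proof -
    assume i: "i < p"
    have "tph i * (\<phi> t i - phs i)^2 / 2 \<le> (\<Sum>i<p. tph i * (\<phi> t i - phs i)^2 / 2)"
      by (rule member_le_sum) (use i P(5) in auto)
    then show ?thesis unfolding V_def using s1 s2 s3 s4 by linarith
  qed
qed

lemma V_nonneg: "V xs ms xis ths phs t \<ge> 0"
  unfolding V_def using parts
  by (intro add_nonneg_nonneg sum_nonneg) blast+

lemma V_decr:
  assumes "EQ xs ms xis ths phs" "0 \<le> s" "s \<le> t"
  shows "V xs ms xis ths phs t \<le> V xs ms xis ths phs s"
  by (rule nonincr[OF V_deriv _ assms(2,3)]) (use VD_eq[OF assms(1)] Wf_nonneg in auto)

definition C0 where "C0 = V xb mub xib thb phb 0"

lemma Vb_le: "t \<ge> 0 \<Longrightarrow> V xb mub xib thb phb t \<le> C0"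
  unfolding C0_def using V_decr[OF EQ_b, of 0 t] by simp

lemma bnd_pot:
  assumes pl: "potl F" and c: "c > 0" and le: "\<forall>t\<ge>0. c * pot F z (y t) \<le> C0"
  shows "bnd y"
proof -
  obtain R where R: "\<forall>v. pot F z v \<le> C0 / c \<longrightarrow> \<bar>v\<bar> \<le> R" using potl.G_radial[OF pl] by blast
  have "\<forall>t\<ge>0. \<bar>y t\<bar> \<le> R"
  proof (intro allI impI)
    fix t :: real assume "t \<ge> 0"
    then have "c * pot F z (y t) \<le> C0" using le by blast
    then have "pot F z (y t) \<le> C0 / c" using c by (simp add: field_simps)
    then show "\<bar>y t\<bar> \<le> R" using R by blast
  qed
  then show ?thesis unfolding bnd_def by blast
qed

lemma bnd_sq:
  assumes c: "c > 0" and le: "\<forall>t\<ge>0. c * (y t - z)^2 / 2 \<le> C0"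
  shows "bnd y"
proof -
  have "\<forall>t\<ge>0. \<bar>y t\<bar> \<le> \<bar>z\<bar> + 1 + 2 * C0 / c"
  proof (intro allI impI)
    fix t :: real assume "t \<ge> 0"
    then have "c * (y t - z)^2 / 2 \<le> C0" using le by blast
    then have "(y t - z)^2 \<le> 2 * C0 / c" using c by (simp add: field_simps)
    moreover have "\<bar>y t - z\<bar> \<le> 1 + (y t - z)^2" by (rule abs_le_sq)
    ultimately show "\<bar>y t\<bar> \<le> \<bar>z\<bar> + 1 + 2 * C0 / c" by linarith
  qed
  then show ?thesis unfolding bnd_def by blast
qed

lemma bx: "i < n \<Longrightarrow> bnd (\<lambda>t. x t i)"
  by (rule bnd_pot[OF potl_h, of i "tx i" "xb i"]) (use tx_pos V_ge(1) Vb_le order_trans in blast)+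

lemma bmu: "k < m \<Longrightarrow> bnd (\<lambda>t. \<mu> t k)"
  by (rule bnd_pot[OF potl_f, of k "tmu k" "mub k"]) (use tmu_pos V_ge(2) Vb_le order_trans in blast)+

lemma bth: "i < p \<Longrightarrow> bnd (\<lambda>t. \<theta> t i)"
  by (rule bnd_pot[OF potl_g, of i "tth i" "thb i"]) (use tth_pos V_ge(4) Vb_le order_trans in blast)+

lemma bxi: "k < m \<Longrightarrow> bnd (\<lambda>t. \<xi> t k)"
  by (rule bnd_sq[of "txi k" _ "xib k"]) (use txi_pos V_ge(3) Vb_le order_trans in blast)+

lemma bph: "i < p \<Longrightarrow> bnd (\<lambda>t. \<phi> t i)"
  by (rule bnd_sq[of "tph i" _ "phb i"]) (use tph_pos V_ge(5) Vb_le order_trans in blast)+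

end

lemma bnd_div: "bnd y \<Longrightarrow> bnd (\<lambda>t. y t / c)"
  unfolding bnd_def
proof (elim exE)
  fix M assume M: "\<forall>t\<ge>0. \<bar>y t\<bar> \<le> M"
  show "\<exists>M. \<forall>t\<ge>0. \<bar>y t / c\<bar> \<le> M"
  proof (intro exI[of _ "M / \<bar>c\<bar>"] allI impI)
    fix t :: real assume "t \<ge> 0"
    then have "\<bar>y t\<bar> \<le> M" using M by blast
    then show "\<bar>y t / c\<bar> \<le> M / \<bar>c\<bar>" by (simp add: abs_divide divide_right_mono)
  qed
qed

lemma good_div: "good y \<Longrightarrow> good (\<lambda>t. y t / c)"
  using good_mult[OF _ good_const[of "1 / c"], of y] by simp

lemma good_cmult: "good y \<Longrightarrow> good (\<lambda>t. c * y t)"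
  using good_mult[OF good_const[of c], of y] by simp

lemma good_sq: "good y \<Longrightarrow> good (\<lambda>t. (y t)^2)"
  using good_mult[of y y] by (simp add: power2_eq_square)

context sys begin

lemma bhx: "i < n \<Longrightarrow> bnd (\<lambda>t. h i (x t i))" using bnd_comp[OF C1_cont bx] h_C1 by blast
lemma bfmu: "k < m \<Longrightarrow> bnd (\<lambda>t. f k (\<mu> t k))" using bnd_comp[OF C1_cont bmu] f_C1 by blast
lemma bgth: "i < p \<Longrightarrow> bnd (\<lambda>t. g i (\<theta> t i))" using bnd_comp[OF C1_cont bth] g_C1 by blast

lemma bEmul: "bnd (\<lambda>t. Emul p (\<lambda>j. g j (\<theta> t j)) i)"
proof (cases "i < p")
  case True then show ?thesis unfolding Emul_def using bgth[OF True] by simp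
next
  case False then show ?thesis unfolding Emul_def using bnd_const[of 0] by simp
qed

lemma b_rhs_x: "bnd (\<lambda>t. rhs_x m p B f g d (\<mu> t) (\<theta> t) i / tx i)"
  unfolding rhs_x_def
  by (intro bnd_div bnd_diff bnd_add bnd_neg bnd_sum bnd_mult bnd_const bEmul ballI bfmu) auto

lemma b_rhs_mu: "bnd (\<lambda>t. rhs_mu n B h f ybar (x t) (\<mu> t) (\<xi> t) k / tmu k)" if "k < m"
  unfolding rhs_mu_def
  by (intro bnd_div bnd_diff bnd_sum bnd_mult bnd_const ballI bfmu bhx bxi that) auto

lemma b_rhs_xi: "bnd (\<lambda>t. rhs_xi f (\<mu> t) (\<xi> t) k / txi k)" if "k < m"
  unfolding rhs_xi_def by (intro bnd_div bnd_diff bfmu bxi that)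

lemma b_rhs_th: "bnd (\<lambda>t. rhs_theta h g ybar (x t) (\<theta> t) (\<phi> t) i / tth i)" if "i < p"
  unfolding rhs_theta_def using that p_le
  by (intro bnd_div bnd_diff bnd_neg bnd_const bhx bgth bph) auto

lemma b_rhs_ph: "bnd (\<lambda>t. rhs_phi p L q r g (\<theta> t) (\<phi> t) i / tph i)" if "i < p"
  unfolding rhs_phi_def using that
  by (intro bnd_div bnd_diff bnd_mult bnd_add bnd_sum bnd_const bgth bph ballI) auto

lemma gx: "i < n \<Longrightarrow> good (\<lambda>t. x t i)" using good_state[OF bx dx b_rhs_x] by blast
lemma gmu: "k < m \<Longrightarrow> good (\<lambda>t. \<mu> t k)" using good_state[OF bmu dmu b_rhs_mu] by blast
lemma gxi: "k < m \<Longrightarrow> good (\<lambda>t. \<xi> t k)" using good_state[OF bxi dxi b_rhs_xi] by blast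
lemma gth: "i < p \<Longrightarrow> good (\<lambda>t. \<theta> t i)" using good_state[OF bth dth b_rhs_th] by blast
lemma gph: "i < p \<Longrightarrow> good (\<lambda>t. \<phi> t i)" using good_state[OF bph dph b_rhs_ph] by blast

lemma ghx: "i < n \<Longrightarrow> good (\<lambda>t. h i (x t i))" using C1_good[OF _ gx] h_C1 by blast
lemma gfmu: "k < m \<Longrightarrow> good (\<lambda>t. f k (\<mu> t k))" using C1_good[OF _ gmu] f_C1 by blast
lemma ggth: "i < p \<Longrightarrow> good (\<lambda>t. g i (\<theta> t i))" using C1_good[OF _ gth] g_C1 by blast

lemma gzz: "i < p \<Longrightarrow> good (\<lambda>t. zz t i)"
  unfolding zz_def by (intro good_cmult good_diff gph good_const)

lemma gWf: "good Wf"
  unfolding Wf_def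
  by (intro good_add good_div good_sum ballI good_mult good_sq good_diff gfmu gxi ggth gph gzz good_const) auto

lemma Wf_to0: "(Wf \<longlongrightarrow> 0) at_top"
  by (rule barbalat[OF V_deriv[of xb mub xib thb phb]])
     (use VD_eq[OF EQ_b] V_nonneg Wf_nonneg gWf in \<open>auto simp: good_def\<close>)

lemma Wf_ge:
  shows "k < m \<Longrightarrow> (f k (\<mu> t k) - \<xi> t k)^2 \<le> Wf t"
    and "i < p \<Longrightarrow> (g i (\<theta> t i) - \<phi> t i)^2 \<le> Wf t"
    and "i < p \<Longrightarrow> j < p \<Longrightarrow> a i j * (zz t i - zz t j)^2 / 2 \<le> Wf t"
proof -
  have s1: "(\<Sum>k<m. (f k (\<mu> t k) - \<xi> t k)^2) \<ge> 0" by (intro sum_nonneg) simp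
  have s2: "(\<Sum>i<p. (g i (\<theta> t i) - \<phi> t i)^2) \<ge> 0" by (intro sum_nonneg) simp
  have s3: "(\<Sum>i<p. \<Sum>j<p. a i j * (zz t i - zz t j)^2) / 2 \<ge> 0" using quad_nonneg[of "zz t"] by simp
  have an: "\<forall>i<p. \<forall>j<p. a i j \<ge> 0" using digraph unfolding weighted_digraph_def by blast
  show "k < m \<Longrightarrow> (f k (\<mu> t k) - \<xi> t k)^2 \<le> Wf t"
  proof -
    assume k: "k < m"
    have "(f k (\<mu> t k) - \<xi> t k)^2 \<le> (\<Sum>k<m. (f k (\<mu> t k) - \<xi> t k)^2)"
      by (rule member_le_sum) (use k in auto)
    then show ?thesis unfolding Wf_def using s2 s3 by linarith
  qed
  show "i < p \<Longrightarrow> (g i (\<theta> t i) - \<phi> t i)^2 \<le> Wf t"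
  proof -
    assume i: "i < p"
    have "(g i (\<theta> t i) - \<phi> t i)^2 \<le> (\<Sum>i<p. (g i (\<theta> t i) - \<phi> t i)^2)"
      by (rule member_le_sum) (use i in auto)
    then show ?thesis unfolding Wf_def using s1 s3 by linarith
  qed
  show "i < p \<Longrightarrow> j < p \<Longrightarrow> a i j * (zz t i - zz t j)^2 / 2 \<le> Wf t"
  proof -
    assume i: "i < p" and j: "j < p"
    have "a i j * (zz t i - zz t j)^2 \<le> (\<Sum>j<p. a i j * (zz t i - zz t j)^2)"
      by (rule member_le_sum) (use j an i in auto)
    also have "\<dots> \<le> (\<Sum>i<p. \<Sum>j<p. a i j * (zz t i - zz t j)^2)"
      by (rule member_le_sum[of i "{..<p}" "\<lambda>i. \<Sum>j<p. a i j * (zz t i - zz t j)^2"])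
         (use i an in \<open>auto intro!: sum_nonneg\<close>)
    finally show ?thesis unfolding Wf_def using s1 s2 by linarith
  qed
qed

lemma e1_to0: "k < m \<Longrightarrow> ((\<lambda>t. f k (\<mu> t k) - \<xi> t k) \<longlongrightarrow> 0) at_top"
  by (rule sq_to0, rule squeeze0[OF Wf_to0]) (use Wf_ge(1) in auto)

lemma e2_to0: "i < p \<Longrightarrow> ((\<lambda>t. g i (\<theta> t i) - \<phi> t i) \<longlongrightarrow> 0) at_top"
  by (rule sq_to0, rule squeeze0[OF Wf_to0]) (use Wf_ge(2) in auto)

lemma zz_adj:
  assumes i: "i < p" and j: "j < p" and a: "a i j > 0"
  shows "((\<lambda>t. zz t i - zz t j) \<longlongrightarrow> 0) at_top"
proof (rule sq_to0)
  have "((\<lambda>t. a i j * (zz t i - zz t j)^2 / 2) \<longlongrightarrow> 0) at_top"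
    by (rule squeeze0[OF Wf_to0]) (use Wf_ge(3)[OF i j] a in auto)
  then have "((\<lambda>t. (2 / a i j) * (a i j * (zz t i - zz t j)^2 / 2)) \<longlongrightarrow> (2 / a i j) * 0) at_top"
    by (intro tendsto_mult tendsto_const)
  then show "((\<lambda>t. (zz t i - zz t j)^2) \<longlongrightarrow> 0) at_top" using a by simp
qed

lemma zz_all: "i < p \<Longrightarrow> ((\<lambda>t. zz t i - zz t 0) \<longlongrightarrow> 0) at_top"
  by (rule sconn_tend[OF sconn]) (use zz_adj p_ge in auto)

end

context sys begin

lemma chb: "(\<forall>i<n. h i (xb i) = ybar i) \<and> (\<forall>k<m. xib k = f k (mub k)) \<and>
         (\<forall>i<p. g i (thb i) = ub i) \<and> (\<forall>i<p. phb i = ub i) \<and>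
         (\<forall>i<p. (\<Sum>j<p. L i j * (q j * phb j + r j)) = 0) \<and>
         (\<forall>i<n. (\<Sum>k<m. B i k * f k (mub k)) = Emul p ub i - d i)"
  by (rule eq_char[OF EQ_b])

lemma Lzz: "i < p \<Longrightarrow> (\<Sum>j<p. L i j * (q j * \<phi> t j + r j)) = (\<Sum>j<p. L i j * (zz t j - zz t 0))"
proof -
  assume i: "i < p"
  have "(\<Sum>j<p. L i j * (q j * \<phi> t j + r j)) = (\<Sum>j<p. L i j * zz t j + L i j * (q j * phb j + r j))"
    by (rule sum.cong) (use chb in \<open>auto simp: zz_def algebra_simps\<close>)
  also have "\<dots> = (\<Sum>j<p. L i j * zz t j) + (\<Sum>j<p. L i j * (q j * phb j + r j))" by (simp add: sum.distrib)
  also have "\<dots> = (\<Sum>j<p. L i j * zz t j)"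
  proof -
    have "(\<Sum>j<p. L i j * (q j * phb j + r j)) = 0" using chb i by blast
    then show ?thesis by simp
  qed
  also have "\<dots> = (\<Sum>j<p. L i j * (zz t j - zz t 0)) + (\<Sum>j<p. L i j) * zz t 0"
    by (simp add: sum_distrib_right algebra_simps sum_subtractf)
  also have "\<dots> = (\<Sum>j<p. L i j * (zz t j - zz t 0))" using L_rowsum[OF i] by simp
  finally show ?thesis .
qed

lemma Lzz_to0: "i < p \<Longrightarrow> ((\<lambda>t. \<Sum>j<p. L i j * (q j * \<phi> t j + r j)) \<longlongrightarrow> 0) at_top"
proof -
  assume i: "i < p"
  have "((\<lambda>t. \<Sum>j<p. L i j * (zz t j - zz t 0)) \<longlongrightarrow> (\<Sum>j<p. L i j * 0)) at_top"
    by (intro tendsto_sum tendsto_mult tendsto_const) (use zz_all in auto)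
  then show ?thesis using Lzz[OF i] by simp
qed

lemma dph_to0: "i < p \<Longrightarrow> ((\<lambda>t. rhs_phi p L q r g (\<theta> t) (\<phi> t) i / tph i) \<longlongrightarrow> 0) at_top"
proof -
  assume i: "i < p"
  have "((\<lambda>t. ((g i (\<theta> t i) - \<phi> t i) - q i * (\<Sum>j<p. L i j * (q j * \<phi> t j + r j))) / tph i)
      \<longlongrightarrow> ((0 - q i * 0) / tph i)) at_top"
    by (intro tendsto_divide tendsto_diff tendsto_mult tendsto_const e2_to0 Lzz_to0 i) (use tph_pos i in auto)
  then show ?thesis unfolding rhs_phi_def by simp
qed

lemma osc_ph: "i < p \<Longrightarrow> osc (\<lambda>t. \<phi> t i)" using osc_deriv[OF dph dph_to0] by blast

lemma osc_th: "i < p \<Longrightarrow> osc (\<lambda>t. \<theta> t i)"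
proof -
  assume i: "i < p"
  have "osc (\<lambda>t. \<phi> t i + (g i (\<theta> t i) - \<phi> t i))"
    by (rule osc_add[OF osc_ph[OF i] osc_conv[OF e2_to0[OF i]]])
  then have "osc (\<lambda>t. g i (\<theta> t i))" by simp
  then show ?thesis using osc_inv[OF C1_sm C1_cont bth[OF i]] g_C1 i by blast
qed

lemma hx_p: "i < p \<Longrightarrow> ((\<lambda>t. h i (x t i) - ybar i) \<longlongrightarrow> 0) at_top"
proof -
  assume i: "i < p"
  have tp: "tth i > 0" using tth_pos i by blast
  have in_: "i < n" using i p_le by simp
  have "((\<lambda>t. - (h i (x t i) - ybar i) / tth i) \<longlongrightarrow> 0) at_top"
  proof (rule window[OF dth[OF i]])
    show "\<forall>t\<ge>0. rhs_theta h g ybar (x t) (\<theta> t) (\<phi> t) i / tth i =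
      - (h i (x t i) - ybar i) / tth i + (- (g i (\<theta> t i) - \<phi> t i) / tth i)"
      unfolding rhs_theta_def by (simp add: diff_divide_distrib add_divide_distrib)
    show "lip (\<lambda>t. - (h i (x t i) - ybar i) / tth i)"
      using good_div[OF good_neg[OF good_diff[OF ghx[OF in_] good_const]]] unfolding good_def by blast
    have "((\<lambda>t. - (g i (\<theta> t i) - \<phi> t i) / tth i) \<longlongrightarrow> - 0 / tth i) at_top"
      by (intro tendsto_divide tendsto_minus e2_to0 i tendsto_const) (use tp in auto)
    then show "((\<lambda>t. - (g i (\<theta> t i) - \<phi> t i) / tth i) \<longlongrightarrow> 0) at_top" by simp
    show "osc (\<lambda>t. \<theta> t i)" by (rule osc_th[OF i])
  qed
  then have "((\<lambda>t. (- tth i) * (- (h i (x t i) - ybar i) / tth i)) \<longlongrightarrow> (- tth i) * 0) at_top"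
    by (intro tendsto_mult tendsto_const)
  then show ?thesis using tp by simp
qed

lemma osc_xi: "k < m \<Longrightarrow> osc (\<lambda>t. \<xi> t k)"
proof -
  assume k: "k < m"
  have "((\<lambda>t. rhs_xi f (\<mu> t) (\<xi> t) k / txi k) \<longlongrightarrow> 0 / txi k) at_top"
    unfolding rhs_xi_def by (intro tendsto_divide e1_to0 k tendsto_const) (use txi_pos k in auto)
  then show ?thesis using osc_deriv[OF dxi[OF k]] by simp
qed

lemma osc_mu: "k < m \<Longrightarrow> osc (\<lambda>t. \<mu> t k)"
proof -
  assume k: "k < m"
  have "osc (\<lambda>t. \<xi> t k + (f k (\<mu> t k) - \<xi> t k))"
    by (rule osc_add[OF osc_xi[OF k] osc_conv[OF e1_to0[OF k]]])
  then have "osc (\<lambda>t. f k (\<mu> t k))" by simp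
  then show ?thesis using osc_inv[OF C1_sm C1_cont bmu[OF k]] f_C1 k by blast
qed

lemma S_to0: "k < m \<Longrightarrow> ((\<lambda>t. \<Sum>i<n. B i k * (h i (x t i) - ybar i)) \<longlongrightarrow> 0) at_top"
proof -
  assume k: "k < m"
  have tp: "tmu k > 0" using tmu_pos k by blast
  have "((\<lambda>t. (\<Sum>i<n. B i k * (h i (x t i) - ybar i)) / tmu k) \<longlongrightarrow> 0) at_top"
  proof (rule window[OF dmu[OF k]])
    show "\<forall>t\<ge>0. rhs_mu n B h f ybar (x t) (\<mu> t) (\<xi> t) k / tmu k =
      (\<Sum>i<n. B i k * (h i (x t i) - ybar i)) / tmu k + (- (f k (\<mu> t k) - \<xi> t k) / tmu k)"
      unfolding rhs_mu_def by (simp add: diff_divide_distrib add_divide_distrib)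
    have "good (\<lambda>t. (\<Sum>i<n. B i k * (h i (x t i) - ybar i)) / tmu k)"
      by (intro good_div good_sum ballI good_cmult good_diff ghx good_const) auto
    then show "lip (\<lambda>t. (\<Sum>i<n. B i k * (h i (x t i) - ybar i)) / tmu k)" unfolding good_def by blast
    have "((\<lambda>t. - (f k (\<mu> t k) - \<xi> t k) / tmu k) \<longlongrightarrow> - 0 / tmu k) at_top"
      by (intro tendsto_divide tendsto_minus e1_to0 k tendsto_const) (use tp in auto)
    then show "((\<lambda>t. - (f k (\<mu> t k) - \<xi> t k) / tmu k) \<longlongrightarrow> 0) at_top" by simp
    show "osc (\<lambda>t. \<mu> t k)" by (rule osc_mu[OF k])
  qed
  then have "((\<lambda>t. tmu k * ((\<Sum>i<n. B i k * (h i (x t i) - ybar i)) / tmu k)) \<longlongrightarrow> tmu k * 0) at_top"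
    by (intro tendsto_mult tendsto_const)
  then show ?thesis using tp by simp
qed

lemma hx_all: "i < n \<Longrightarrow> ((\<lambda>t. h i (x t i) - ybar i) \<longlongrightarrow> 0) at_top"
proof -
  assume i: "i < n"
  define A where "A t j = h j (x t j) - ybar j" for t j
  have "\<forall>k<m. ((\<lambda>t. A t (epos k) - A t (eneg k)) \<longlongrightarrow> 0) at_top"
    using S_to0 Bsum unfolding A_def by simp
  then have "((\<lambda>t. A t i - A t 0) \<longlongrightarrow> 0) at_top" using conn_tend[OF conn _ i n_pos] by blast
  moreover have "((\<lambda>t. A t 0) \<longlongrightarrow> 0) at_top" using hx_p[of 0] p_ge unfolding A_def by linarith
  ultimately have "((\<lambda>t. (A t i - A t 0) + A t 0) \<longlongrightarrow> 0 + 0) at_top" by (intro tendsto_add)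
  then show ?thesis unfolding A_def by simp
qed

lemma x_lim: "i < n \<Longrightarrow> ((\<lambda>t. x t i) \<longlongrightarrow> xb i) at_top"
proof -
  assume i: "i < n"
  have "((\<lambda>t. (h i (x t i) - ybar i) + ybar i) \<longlongrightarrow> 0 + ybar i) at_top"
    using tendsto_add[OF hx_all[OF i] tendsto_const[of "ybar i"]] by simp
  moreover have "h i (xb i) = ybar i" using chb i by blast
  ultimately have "((\<lambda>t. h i (x t i)) \<longlongrightarrow> h i (xb i)) at_top" by simp
  moreover have "strict_mono (h i)" using C1_sm h_C1 i by blast
  ultimately show ?thesis using inv_lim[of "h i" "\<lambda>t. x t i" "xb i"] by blast
qed

end

context sys begin

lemma sum_ub: "(\<Sum>i<p. ub i) = (\<Sum>i<n. d i)"
proof -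
  have "0 = (\<Sum>i<n. \<Sum>k<m. B i k * f k (mub k))" using Bdouble by simp
  also have "\<dots> = (\<Sum>i<n. Emul p ub i - d i)" by (rule sum.cong) (use chb in auto)
  also have "\<dots> = (\<Sum>i<p. ub i) - (\<Sum>i<n. d i)" by (simp add: sum_subtractf Emul_sum)
  finally show ?thesis by simp
qed

lemma dsum: "deriv0 (\<lambda>t. \<Sum>i<n. tx i * x t i) (\<lambda>t. \<Sum>i<n. rhs_x m p B f g d (\<mu> t) (\<theta> t) i)"
  unfolding deriv0_def
proof (intro allI impI)
  fix t :: real assume t: "t \<ge> 0"
  have "((\<lambda>s. \<Sum>i<n. tx i * x s i) has_real_derivative (\<Sum>i<n. tx i * (rhs_x m p B f g d (\<mu> t) (\<theta> t) i / tx i))) (at t within {0..})"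
    by (intro DERIV_sum DERIV_cmult) (use dx t in \<open>auto simp: deriv0_def\<close>)
  moreover have "(\<Sum>i<n. tx i * (rhs_x m p B f g d (\<mu> t) (\<theta> t) i / tx i)) = (\<Sum>i<n. rhs_x m p B f g d (\<mu> t) (\<theta> t) i)"
    by (rule sum.cong) (use tx_pos in auto)
  ultimately show "((\<lambda>s. \<Sum>i<n. tx i * x s i) has_real_derivative (\<Sum>i<n. rhs_x m p B f g d (\<mu> t) (\<theta> t) i)) (at t within {0..})"
    by simp
qed

lemma rx_sum: "(\<Sum>i<n. rhs_x m p B f g d (\<mu> t) (\<theta> t) i) = (\<Sum>i<p. g i (\<theta> t i)) - (\<Sum>i<n. d i)"
  unfolding rhs_x_def by (simp add: sum.distrib sum_subtractf Bdouble Emul_sum)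

lemma gsum_to: "((\<lambda>t. (\<Sum>i<p. g i (\<theta> t i)) - (\<Sum>i<n. d i)) \<longlongrightarrow> 0) at_top"
proof (rule window[OF dsum])
  show "\<forall>t\<ge>0. (\<Sum>i<n. rhs_x m p B f g d (\<mu> t) (\<theta> t) i) = ((\<Sum>i<p. g i (\<theta> t i)) - (\<Sum>i<n. d i)) + 0"
    using rx_sum by simp
  have "good (\<lambda>t. (\<Sum>i<p. g i (\<theta> t i)) - (\<Sum>i<n. d i))"
    by (intro good_diff good_sum ballI ggth good_const) auto
  then show "lip (\<lambda>t. (\<Sum>i<p. g i (\<theta> t i)) - (\<Sum>i<n. d i))" unfolding good_def by blast
  show "((\<lambda>t. 0) \<longlongrightarrow> 0) at_top" by simp
  have "((\<lambda>t. \<Sum>i<n. tx i * x t i) \<longlongrightarrow> (\<Sum>i<n. tx i * xb i)) at_top"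
    by (intro tendsto_sum tendsto_mult tendsto_const x_lim) auto
  then show "osc (\<lambda>t. \<Sum>i<n. tx i * x t i)" by (rule osc_conv)
qed

lemma phsum_to: "((\<lambda>t. \<Sum>i<p. (\<phi> t i - ub i)) \<longlongrightarrow> 0) at_top"
proof -
  have e: "(\<Sum>i<p. (\<phi> t i - ub i)) = ((\<Sum>i<p. g i (\<theta> t i)) - (\<Sum>i<n. d i)) - (\<Sum>i<p. (g i (\<theta> t i) - \<phi> t i))" for t
    using sum_ub by (simp add: sum_subtractf)
  have "((\<lambda>t. ((\<Sum>i<p. g i (\<theta> t i)) - (\<Sum>i<n. d i)) - (\<Sum>i<p. (g i (\<theta> t i) - \<phi> t i))) \<longlongrightarrow> 0 - (\<Sum>i<p. 0)) at_top"
    by (intro tendsto_diff gsum_to tendsto_sum e2_to0) auto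
  then show ?thesis unfolding e by simp
qed

lemma zz0_to: "((\<lambda>t. zz t 0) \<longlongrightarrow> 0) at_top"
proof -
  define S1 where "S1 = (\<Sum>j<p. 1 / q j)"
  have S1: "S1 > 0" unfolding S1_def by (rule S1_pos)
  have e: "zz t 0 * S1 = (\<Sum>i<p. (\<phi> t i - ub i)) - (\<Sum>i<p. (zz t i - zz t 0) / q i)" for t
  proof -
    have "(\<Sum>i<p. (\<phi> t i - ub i)) = (\<Sum>i<p. (zz t i - zz t 0) / q i + zz t 0 * (1 / q i))"
      by (rule sum.cong) (use q_pos in \<open>auto simp: zz_def field_simps\<close>)
    then show ?thesis unfolding S1_def by (simp add: sum.distrib sum_distrib_left)
  qed
  have "((\<lambda>t. (\<Sum>i<p. (\<phi> t i - ub i)) - (\<Sum>i<p. (zz t i - zz t 0) / q i)) \<longlongrightarrow> 0 - (\<Sum>i<p. 0 / q i)) at_top"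
    by (intro tendsto_diff phsum_to tendsto_sum tendsto_divide zz_all tendsto_const) (use q_pos in auto)
  then have "((\<lambda>t. zz t 0 * S1) \<longlongrightarrow> 0) at_top" unfolding e by simp
  then have "((\<lambda>t. zz t 0 * S1 / S1) \<longlongrightarrow> 0 / S1) at_top" by (intro tendsto_divide tendsto_const) (use S1 in auto)
  then show ?thesis using S1 by simp
qed

lemma ph_lim: "i < p \<Longrightarrow> ((\<lambda>t. \<phi> t i) \<longlongrightarrow> phb i) at_top"
proof -
  assume i: "i < p"
  have qi: "q i > 0" using q_pos i by blast
  have "((\<lambda>t. ((zz t i - zz t 0) + zz t 0) / q i + ub i) \<longlongrightarrow> ((0 + 0) / q i + ub i)) at_top"
    by (intro tendsto_add tendsto_divide zz_all i zz0_to tendsto_const) (use qi in auto)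
  moreover have "((zz t i - zz t 0) + zz t 0) / q i + ub i = \<phi> t i" for t using qi by (simp add: zz_def)
  moreover have "phb i = ub i" using chb i by blast
  ultimately show ?thesis by simp
qed

lemma th_lim: "i < p \<Longrightarrow> ((\<lambda>t. \<theta> t i) \<longlongrightarrow> thb i) at_top"
proof -
  assume i: "i < p"
  have "((\<lambda>t. \<phi> t i + (g i (\<theta> t i) - \<phi> t i)) \<longlongrightarrow> phb i + 0) at_top"
    by (intro tendsto_add ph_lim e2_to0 i)
  moreover have "phb i = g i (thb i)" using chb i by simp
  ultimately have "((\<lambda>t. g i (\<theta> t i)) \<longlongrightarrow> g i (thb i)) at_top" by simp
  moreover have "strict_mono (g i)" using C1_sm g_C1 i by blast
  ultimately show ?thesis using inv_lim[of "g i" "\<lambda>t. \<theta> t i" "thb i"] by blast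
qed

lemma Blam_to: "i < n \<Longrightarrow> ((\<lambda>t. \<Sum>k<m. B i k * (f k (\<mu> t k) - f k (mub k))) \<longlongrightarrow> 0) at_top"
proof -
  assume i: "i < n"
  have tp: "tx i > 0" using tx_pos i by blast
  have eb: "(\<Sum>k<m. B i k * f k (mub k)) = Emul p ub i - d i" using chb i by blast
  have Eto: "((\<lambda>t. Emul p (\<lambda>j. g j (\<theta> t j)) i - Emul p ub i) \<longlongrightarrow> 0) at_top"
  proof (cases "i < p")
    case True
    have "((\<lambda>t. g i (\<theta> t i) - ub i) \<longlongrightarrow> 0) at_top"
    proof -
      have "((\<lambda>t. (\<phi> t i - phb i) + (g i (\<theta> t i) - \<phi> t i)) \<longlongrightarrow> 0 + 0) at_top"
        using tendsto_add[OF LIM_zero[OF ph_lim[OF True]] e2_to0[OF True]] .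
      moreover have "phb i = ub i" using chb True by blast
      ultimately show ?thesis by simp
    qed
    then show ?thesis using True unfolding Emul_def by simp
  next
    case False then show ?thesis unfolding Emul_def by simp
  qed
  have "((\<lambda>t. - (\<Sum>k<m. B i k * (f k (\<mu> t k) - f k (mub k))) / tx i) \<longlongrightarrow> 0) at_top"
  proof (rule window[OF dx[OF i]])
    show "\<forall>t\<ge>0. rhs_x m p B f g d (\<mu> t) (\<theta> t) i / tx i =
      - (\<Sum>k<m. B i k * (f k (\<mu> t k) - f k (mub k))) / tx i + (Emul p (\<lambda>j. g j (\<theta> t j)) i - Emul p ub i) / tx i"
    proof (intro allI impI)
      fix t :: real
      have "(\<Sum>k<m. B i k * (f k (\<mu> t k) - f k (mub k))) = (\<Sum>k<m. B i k * f k (\<mu> t k)) - (Emul p ub i - d i)"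
        unfolding eb[symmetric] by (simp add: sum_subtractf right_diff_distrib)
      then show "rhs_x m p B f g d (\<mu> t) (\<theta> t) i / tx i =
        - (\<Sum>k<m. B i k * (f k (\<mu> t k) - f k (mub k))) / tx i + (Emul p (\<lambda>j. g j (\<theta> t j)) i - Emul p ub i) / tx i"
        unfolding rhs_x_def by (simp add: add_divide_distrib[symmetric] diff_divide_distrib[symmetric])
    qed
    have "good (\<lambda>t. - (\<Sum>k<m. B i k * (f k (\<mu> t k) - f k (mub k))) / tx i)"
      by (intro good_div good_neg good_sum ballI good_cmult good_diff gfmu good_const) auto
    then show "lip (\<lambda>t. - (\<Sum>k<m. B i k * (f k (\<mu> t k) - f k (mub k))) / tx i)" unfolding good_def by blast
    have "((\<lambda>t. (Emul p (\<lambda>j. g j (\<theta> t j)) i - Emul p ub i) / tx i) \<longlongrightarrow> 0 / tx i) at_top"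
      by (intro tendsto_divide Eto tendsto_const) (use tp in auto)
    then show "((\<lambda>t. (Emul p (\<lambda>j. g j (\<theta> t j)) i - Emul p ub i) / tx i) \<longlongrightarrow> 0) at_top" by simp
    show "osc (\<lambda>t. x t i)" by (rule osc_conv[OF x_lim[OF i]])
  qed
  then have "((\<lambda>t. (- tx i) * (- (\<Sum>k<m. B i k * (f k (\<mu> t k) - f k (mub k))) / tx i)) \<longlongrightarrow> (- tx i) * 0) at_top"
    by (intro tendsto_mult tendsto_const)
  then show ?thesis using tp by simp
qed

end

context sys begin

definition sq :: "nat \<Rightarrow> nat \<Rightarrow> real" where
  "sq j k = (if k < m then \<mu> (real j) k else \<xi> (real j) (k - m))"

lemma sq_bnd: "\<forall>k<2 * m. \<exists>M. \<forall>j. \<bar>sq j k\<bar> \<le> M"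
proof (intro allI impI)
  fix k assume k: "k < 2 * m"
  show "\<exists>M. \<forall>j. \<bar>sq j k\<bar> \<le> M"
  proof (cases "k < m")
    case True
    obtain M where "\<forall>t\<ge>0. \<bar>\<mu> t k\<bar> \<le> M" using bmu[OF True] unfolding bnd_def by blast
    then show ?thesis using True unfolding sq_def by (intro exI[of _ M]) auto
  next
    case False
    then have k': "k - m < m" using k by simp
    obtain M where "\<forall>t\<ge>0. \<bar>\<xi> t (k - m)\<bar> \<le> M" using bxi[OF k'] unfolding bnd_def by blast
    then show ?thesis using False unfolding sq_def by (intro exI[of _ M]) auto
  qed
qed

lemma omega_pt: "\<exists>rr mul xil. strict_mono rr \<and>
   (\<forall>k<m. (\<lambda>j. \<mu> (real (rr j)) k) \<longlonglongrightarrow> mul k) \<and> (\<forall>k<m. (\<lambda>j. \<xi> (real (rr j)) k) \<longlonglongrightarrow> xil k)"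
proof -
  obtain rr l where rl: "strict_mono rr" "\<forall>k<2*m. (\<lambda>j. sq (rr j) k) \<longlonglongrightarrow> l k"
    using subseq_ex[OF sq_bnd] by auto
  have "\<forall>k<m. (\<lambda>j. \<mu> (real (rr j)) k) \<longlonglongrightarrow> l k"
  proof (intro allI impI)
    fix k assume k: "k < m"
    then have "(\<lambda>j. sq (rr j) k) \<longlonglongrightarrow> l k" using rl(2) by simp
    then show "(\<lambda>j. \<mu> (real (rr j)) k) \<longlonglongrightarrow> l k" using k unfolding sq_def by simp
  qed
  moreover have "\<forall>k<m. (\<lambda>j. \<xi> (real (rr j)) k) \<longlonglongrightarrow> l (k + m)"
  proof (intro allI impI)
    fix k assume k: "k < m"
    then have "(\<lambda>j. sq (rr j) (k + m)) \<longlonglongrightarrow> l (k + m)" using rl(2) by simp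
    then show "(\<lambda>j. \<xi> (real (rr j)) k) \<longlonglongrightarrow> l (k + m)" unfolding sq_def by simp
  qed
  ultimately show ?thesis using rl(1)
    by (intro exI[of _ rr] exI[of _ l] exI[of _ "\<lambda>k. l (k + m)"]) simp
qed

lemma fcont: "k < m \<Longrightarrow> isCont (f k) v" using C1_cont f_C1 by blast

theorem conv_main:
  "\<exists>mul xil :: nat \<Rightarrow> real.
     (\<forall>k<m. ((\<lambda>t. \<mu> t k) \<longlongrightarrow> mul k) at_top) \<and>
     (\<forall>k<m. ((\<lambda>t. \<xi> t k) \<longlongrightarrow> xil k) at_top) \<and>
     (\<forall>k<m. xil k = f k (mul k)) \<and>
     (\<forall>i<n. (\<Sum>k<m. B i k * (f k (mul k) - f k (mub k))) = 0)"
proof -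
  obtain rr mul xil where R: "strict_mono rr" "\<forall>k<m. (\<lambda>j. \<mu> (real (rr j)) k) \<longlonglongrightarrow> mul k"
    "\<forall>k<m. (\<lambda>j. \<xi> (real (rr j)) k) \<longlonglongrightarrow> xil k" using omega_pt by auto
  have fm: "(\<lambda>j. f k (\<mu> (real (rr j)) k)) \<longlonglongrightarrow> f k (mul k)" if k: "k < m" for k
    using isCont_tendsto_compose[OF fcont[OF k] R(2)[rule_format, OF k]] .
  have a: "xil k = f k (mul k)" if k: "k < m" for k
  proof -
    have "(\<lambda>j. f k (\<mu> (real (rr j)) k) - \<xi> (real (rr j)) k) \<longlonglongrightarrow> 0"
      using along[OF e1_to0[OF k] R(1)] .
    moreover have "(\<lambda>j. f k (\<mu> (real (rr j)) k) - \<xi> (real (rr j)) k) \<longlonglongrightarrow> f k (mul k) - xil k"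
      by (intro tendsto_diff fm k R(3)[rule_format, OF k])
    ultimately have "f k (mul k) - xil k = 0" using LIMSEQ_unique by blast
    then show ?thesis by simp
  qed
  have b: "(\<Sum>k<m. B i k * (f k (mul k) - f k (mub k))) = 0" if i: "i < n" for i
  proof -
    have "(\<lambda>j. \<Sum>k<m. B i k * (f k (\<mu> (real (rr j)) k) - f k (mub k))) \<longlonglongrightarrow> 0"
      using along[OF Blam_to[OF i] R(1)] .
    moreover have "(\<lambda>j. \<Sum>k<m. B i k * (f k (\<mu> (real (rr j)) k) - f k (mub k))) \<longlonglongrightarrow> (\<Sum>k<m. B i k * (f k (mul k) - f k (mub k)))"
      by (intro tendsto_sum tendsto_mult tendsto_diff tendsto_const fm) auto
    ultimately show ?thesis using LIMSEQ_unique by blast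
  qed
  have E0: "EQ xb mub xib thb phb" by (rule EQ_b)
  have EQ0: "(\<forall>i<n. rhs_x m p B f g d mub thb i = 0) \<and>
     (\<forall>k<m. rhs_mu n B h f ybar xb mub xib k = 0) \<and>
     (\<forall>k<m. rhs_xi f mub xib k = 0) \<and>
     (\<forall>i<p. rhs_theta h g ybar xb thb phb i = 0) \<and>
     (\<forall>i<p. rhs_phi p L q r g thb phb i = 0)" using E0 unfolding EQ_def .
  have q1: "\<forall>i<n. rhs_x m p B f g d mul thb i = 0"
  proof (intro allI impI)
    fix i assume i: "i < n"
    have "rhs_x m p B f g d mub thb i = 0" using EQ0 i by blast
    moreover have "(\<Sum>k<m. B i k * f k (mul k)) = (\<Sum>k<m. B i k * f k (mub k))"
      using b[OF i] by (simp add: right_diff_distrib sum_subtractf)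
    ultimately show "rhs_x m p B f g d mul thb i = 0" unfolding rhs_x_def by simp
  qed
  have q2: "\<forall>k<m. rhs_mu n B h f ybar xb mul xil k = 0"
  proof (intro allI impI)
    fix k assume k: "k < m"
    have "rhs_mu n B h f ybar xb mub xib k = 0" "rhs_xi f mub xib k = 0" using EQ0 k by blast+
    then show "rhs_mu n B h f ybar xb mul xil k = 0" using a[OF k] unfolding rhs_mu_def rhs_xi_def by simp
  qed
  have q3: "\<forall>k<m. rhs_xi f mul xil k = 0" using a unfolding rhs_xi_def by simp
  have EQo: "EQ xb mul xil thb phb" unfolding EQ_def using q1 q2 q3 EQ0 by blast
  define Vo where "Vo = V xb mul xil thb phb"
  have Vo_seq: "(\<lambda>j. Vo (real (rr j))) \<longlonglongrightarrow> 0"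
  proof -
    have t1: "(\<lambda>j. \<Sum>i<n. tx i * pot (h i) (xb i) (x (real (rr j)) i)) \<longlonglongrightarrow> (\<Sum>i<n. tx i * pot (h i) (xb i) (xb i))"
      by (intro tendsto_sum tendsto_mult tendsto_const isCont_tendsto_compose[OF potl.G_cont[OF potl_h]] along[OF x_lim R(1)]) auto
    have t2: "(\<lambda>j. \<Sum>k<m. tmu k * pot (f k) (mul k) (\<mu> (real (rr j)) k)) \<longlonglongrightarrow> (\<Sum>k<m. tmu k * pot (f k) (mul k) (mul k))"
      by (intro tendsto_sum tendsto_mult tendsto_const isCont_tendsto_compose[OF potl.G_cont[OF potl_f]]) (use R(2) in auto)
    have t3: "(\<lambda>j. \<Sum>k<m. txi k * (\<xi> (real (rr j)) k - xil k)^2 / 2) \<longlonglongrightarrow> (\<Sum>k<m. txi k * (xil k - xil k)^2 / 2)"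
      by (intro tendsto_sum tendsto_mult tendsto_divide tendsto_power tendsto_diff tendsto_const) (use R(3) in auto)
    have t4: "(\<lambda>j. \<Sum>i<p. tth i * pot (g i) (thb i) (\<theta> (real (rr j)) i)) \<longlonglongrightarrow> (\<Sum>i<p. tth i * pot (g i) (thb i) (thb i))"
      by (intro tendsto_sum tendsto_mult tendsto_const isCont_tendsto_compose[OF potl.G_cont[OF potl_g]] along[OF th_lim R(1)]) auto
    have t5: "(\<lambda>j. \<Sum>i<p. tph i * (\<phi> (real (rr j)) i - phb i)^2 / 2) \<longlonglongrightarrow> (\<Sum>i<p. tph i * (phb i - phb i)^2 / 2)"
      by (intro tendsto_sum tendsto_mult tendsto_divide tendsto_power tendsto_diff tendsto_const along[OF ph_lim R(1)]) auto
    have z: "(\<Sum>i<n. tx i * pot (h i) (xb i) (xb i)) + (\<Sum>k<m. tmu k * pot (f k) (mul k) (mul k)) +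
       (\<Sum>k<m. txi k * (xil k - xil k)^2 / 2) + (\<Sum>i<p. tth i * pot (g i) (thb i) (thb i)) +
       (\<Sum>i<p. tph i * (phb i - phb i)^2 / 2) = 0"
      using potl.G_c[OF potl_h] potl.G_c[OF potl_f] potl.G_c[OF potl_g] by simp
    have "(\<lambda>j. Vo (real (rr j))) \<longlonglongrightarrow> (\<Sum>i<n. tx i * pot (h i) (xb i) (xb i)) + (\<Sum>k<m. tmu k * pot (f k) (mul k) (mul k)) +
       (\<Sum>k<m. txi k * (xil k - xil k)^2 / 2) + (\<Sum>i<p. tth i * pot (g i) (thb i) (thb i)) +
       (\<Sum>i<p. tph i * (phb i - phb i)^2 / 2)"
      unfolding Vo_def V_def by (intro tendsto_add t1 t2 t3 t4 t5)
    then show ?thesis unfolding z .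
  qed
  have Vo_to: "(Vo \<longlongrightarrow> 0) at_top"
  proof (rule t0I)
    fix e :: real assume e: "e > 0"
    obtain J where J: "\<forall>j\<ge>J. \<bar>Vo (real (rr j)) - 0\<bar> < e"
      using Vo_seq e unfolding LIMSEQ_def dist_real_def by blast
    have "\<forall>t\<ge>real (rr J). \<bar>Vo t - 0\<bar> < e"
    proof (intro allI impI)
      fix t assume t: "t \<ge> real (rr J)"
      have "Vo t \<le> Vo (real (rr J))" unfolding Vo_def by (rule V_decr[OF EQo]) (use t in auto)
      moreover have "Vo t \<ge> 0" unfolding Vo_def by (rule V_nonneg)
      moreover have "Vo (real (rr J)) < e" using J by auto
      ultimately show "\<bar>Vo t - 0\<bar> < e" by simp
    qed
    then show "\<exists>T. \<forall>t\<ge>T. \<bar>Vo t - 0\<bar> < e" by blast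
  qed
  have mu_to: "((\<lambda>t. \<mu> t k) \<longlongrightarrow> mul k) at_top" if k: "k < m" for k
  proof -
    have tp: "tmu k > 0" using tmu_pos k by blast
    have "((\<lambda>t. tmu k * pot (f k) (mul k) (\<mu> t k)) \<longlongrightarrow> 0) at_top"
      by (rule squeeze0[OF Vo_to]) (use V_ge(2)[OF k] parts(2) k in \<open>auto simp: Vo_def\<close>)
    then have "((\<lambda>t. (1 / tmu k) * (tmu k * pot (f k) (mul k) (\<mu> t k))) \<longlongrightarrow> (1 / tmu k) * 0) at_top"
      by (intro tendsto_mult tendsto_const)
    then have "((\<lambda>t. pot (f k) (mul k) (\<mu> t k)) \<longlongrightarrow> 0) at_top" using tp by simp
    then show ?thesis by (rule potl.G_lim[OF potl_f[OF k]])
  qed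
  have xi_to: "((\<lambda>t. \<xi> t k) \<longlongrightarrow> xil k) at_top" if k: "k < m" for k
  proof -
    have tp: "txi k > 0" using txi_pos k by blast
    have "((\<lambda>t. txi k * (\<xi> t k - xil k)^2 / 2) \<longlongrightarrow> 0) at_top"
      by (rule squeeze0[OF Vo_to]) (use V_ge(3)[OF k] parts(3) k in \<open>auto simp: Vo_def\<close>)
    then have "((\<lambda>t. (2 / txi k) * (txi k * (\<xi> t k - xil k)^2 / 2)) \<longlongrightarrow> (2 / txi k) * 0) at_top"
      by (intro tendsto_mult tendsto_const)
    then have "((\<lambda>t. (\<xi> t k - xil k)^2) \<longlongrightarrow> 0) at_top" using tp by simp
    then have "((\<lambda>t. \<xi> t k - xil k) \<longlongrightarrow> 0) at_top" by (rule sq_to0)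
    then show ?thesis by (simp add: LIM_zero_iff)
  qed
  show ?thesis using mu_to xi_to a b by blast
qed

end

theorem theorem1:
  fixes n m p :: nat
    and epos eneg :: "nat \<Rightarrow> nat"
    and tx tmu txi tth tph q r d ybar :: "nat \<Rightarrow> real"
    and h f g :: "nat \<Rightarrow> real \<Rightarrow> real"
    and a :: "nat \<Rightarrow> nat \<Rightarrow> real"
    and lam_lo lam_hi u_lo u_hi :: "nat \<Rightarrow> ereal"
    and xb mub xib thb phb :: "nat \<Rightarrow> real"
    and x \<mu> \<xi> \<theta> \<phi> :: "real \<Rightarrow> nat \<Rightarrow> real"
  defines "B \<equiv> incidence epos eneg"
      and "L \<equiv> laplacian p a"
      and "ub \<equiv> ubar n p q r d"
  assumes graph: "graph_ok n m epos eneg" and conn: "graph_connected n m epos eneg"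
    and p_ge: "1 \<le> p" and p_le: "p \<le> n"
    and tx_pos: "\<forall>i<n. tx i > 0" and tmu_pos: "\<forall>k<m. tmu k > 0"
    and txi_pos: "\<forall>k<m. txi k > 0" and tth_pos: "\<forall>i<p. tth i > 0"
    and tph_pos: "\<forall>i<p. tph i > 0"
    and h_C1: "\<forall>i<n. C1_strict_incr (h i)"
    and ybar_rng: "\<forall>i<n. ybar i \<in> range (h i)"
    and q_pos: "\<forall>i<p. q i > 0"
    and digraph: "weighted_digraph p a" and bal: "balanced p a"
    and sconn: "strongly_connected p a"
    and f_C1: "\<forall>k<m. C1_strict_incr (f k)"
    and lam_bnds: "\<forall>k<m. lam_lo k < lam_hi k"
    and f_rng: "\<forall>k<m. range (f k) = open_ival (lam_lo k) (lam_hi k)"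
    and g_C1: "\<forall>i<p. C1_strict_incr (g i)"
    and u_bnds: "\<forall>i<p. u_lo i < u_hi i"
    and g_rng: "\<forall>i<p. range (g i) = open_ival (u_lo i) (u_hi i)"
    and omega: "\<exists>\<omega> :: nat \<Rightarrow> real. \<forall>k<m.
        (\<Sum>i<n. pinv n m B k i * (Emul p ub i - d i))
        + (\<omega> k - (\<Sum>l<m. mmul n (pinv n m B) B k l * \<omega> l)) \<in> range (f k)"
    and ub_rng: "\<forall>i<p. ub i \<in> range (g i)"
    and equil: "(\<forall>i<n. rhs_x m p B f g d mub thb i = 0) \<and>
                (\<forall>k<m. rhs_mu n B h f ybar xb mub xib k = 0) \<and>
                (\<forall>k<m. rhs_xi f mub xib k = 0) \<and>
                (\<forall>i<p. rhs_theta h g ybar xb thb phb i = 0) \<and>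
                (\<forall>i<p. rhs_phi p L q r g thb phb i = 0)"
    and sol: "\<forall>t\<ge>0.
        (\<forall>i<n. ((\<lambda>s. x s i) has_real_derivative
            rhs_x m p B f g d (\<mu> t) (\<theta> t) i / tx i) (at t within {0..})) \<and>
        (\<forall>k<m. ((\<lambda>s. \<mu> s k) has_real_derivative
            rhs_mu n B h f ybar (x t) (\<mu> t) (\<xi> t) k / tmu k) (at t within {0..})) \<and>
        (\<forall>k<m. ((\<lambda>s. \<xi> s k) has_real_derivative
            rhs_xi f (\<mu> t) (\<xi> t) k / txi k) (at t within {0..})) \<and>
        (\<forall>i<p. ((\<lambda>s. \<theta> s i) has_real_derivative
            rhs_theta h g ybar (x t) (\<theta> t) (\<phi> t) i / tth i) (at t within {0..})) \<and>
        (\<forall>i<p. ((\<lambda>s. \<phi> s i) has_real_derivative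
            rhs_phi p L q r g (\<theta> t) (\<phi> t) i / tph i) (at t within {0..}))"
  shows "(\<exists>xl mul xil thl phl :: nat \<Rightarrow> real.
            \<comment> \<open>convergence of the state\<close>
            (\<forall>i<n. ((\<lambda>t. x t i) \<longlongrightarrow> xl i) at_top) \<and>
            (\<forall>k<m. ((\<lambda>t. \<mu> t k) \<longlongrightarrow> mul k) at_top) \<and>
            (\<forall>k<m. ((\<lambda>t. \<xi> t k) \<longlongrightarrow> xil k) at_top) \<and>
            (\<forall>i<p. ((\<lambda>t. \<theta> t i) \<longlongrightarrow> thl i) at_top) \<and>
            (\<forall>i<p. ((\<lambda>t. \<phi> t i) \<longlongrightarrow> phl i) at_top) \<and>
            \<comment> \<open>the limit lies in Upsilon_1\<close>
            (\<forall>i<n. (\<Sum>k<m. B i k * (f k (mul k) - f k (mub k))) = 0) \<and>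
            (\<forall>i<n. (\<Sum>k<m. B i k * (xil k - xib k)) = 0) \<and>
            (\<forall>i<n. xl i = xb i) \<and> (\<forall>i<p. thl i = thb i) \<and> (\<forall>i<p. phl i = phb i) \<and>
            \<comment> \<open>lambda tends to a constant, h(x) = ybar and u = ubar at the limit\<close>
            (\<forall>k<m. ((\<lambda>t. f k (\<mu> t k)) \<longlongrightarrow> f k (mul k)) at_top) \<and>
            (\<forall>i<n. h i (xl i) = ybar i) \<and>
            (\<forall>i<p. g i (thl i) = ub i)) \<and>
         (\<forall>t\<ge>0. (\<forall>i<p. u_lo i < ereal (g i (\<theta> t i)) \<and> ereal (g i (\<theta> t i)) < u_hi i) \<and>
                 (\<forall>k<m. lam_lo k < ereal (f k (\<mu> t k)) \<and> ereal (f k (\<mu> t k)) < lam_hi k))"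
  proof -
  interpret S: sys n m p epos eneg tx tmu txi tth tph q r d ybar h f g a xb mub xib thb phb x \<mu> \<xi> \<theta> \<phi> B L ub
    unfolding sys_def using assms by blast
  obtain mul xil where C: "\<forall>k<m. ((\<lambda>t. \<mu> t k) \<longlongrightarrow> mul k) at_top"
     "\<forall>k<m. ((\<lambda>t. \<xi> t k) \<longlongrightarrow> xil k) at_top"
     "\<forall>k<m. xil k = f k (mul k)"
     "\<forall>i<n. (\<Sum>k<m. B i k * (f k (mul k) - f k (mub k))) = 0"
    using S.conv_main by blast
  have xib: "\<forall>k<m. xib k = f k (mub k)" using S.chb by blast
  have Bxi: "\<forall>i<n. (\<Sum>k<m. B i k * (xil k - xib k)) = 0"
  proof (intro allI impI)
    fix i assume i: "i < n"
    have "(\<Sum>k<m. B i k * (xil k - xib k)) = (\<Sum>k<m. B i k * (f k (mul k) - f k (mub k)))"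
      by (rule sum.cong) (use C(3) xib in auto)
    then show "(\<Sum>k<m. B i k * (xil k - xib k)) = 0" using C(4) i by simp
  qed
  have flim: "\<forall>k<m. ((\<lambda>t. f k (\<mu> t k)) \<longlongrightarrow> f k (mul k)) at_top"
    using isCont_tendsto_compose[OF S.fcont] C(1) by blast
  have hx: "\<forall>i<n. h i (xb i) = ybar i" and gth: "\<forall>i<p. g i (thb i) = ub i" using S.chb by blast+
  have part1: "\<exists>xl mul xil thl phl :: nat \<Rightarrow> real.
            (\<forall>i<n. ((\<lambda>t. x t i) \<longlongrightarrow> xl i) at_top) \<and>
            (\<forall>k<m. ((\<lambda>t. \<mu> t k) \<longlongrightarrow> mul k) at_top) \<and>
            (\<forall>k<m. ((\<lambda>t. \<xi> t k) \<longlongrightarrow> xil k) at_top) \<and>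
            (\<forall>i<p. ((\<lambda>t. \<theta> t i) \<longlongrightarrow> thl i) at_top) \<and>
            (\<forall>i<p. ((\<lambda>t. \<phi> t i) \<longlongrightarrow> phl i) at_top) \<and>
            (\<forall>i<n. (\<Sum>k<m. B i k * (f k (mul k) - f k (mub k))) = 0) \<and>
            (\<forall>i<n. (\<Sum>k<m. B i k * (xil k - xib k)) = 0) \<and>
            (\<forall>i<n. xl i = xb i) \<and> (\<forall>i<p. thl i = thb i) \<and> (\<forall>i<p. phl i = phb i) \<and>
            (\<forall>k<m. ((\<lambda>t. f k (\<mu> t k)) \<longlongrightarrow> f k (mul k)) at_top) \<and>
            (\<forall>i<n. h i (xl i) = ybar i) \<and>
            (\<forall>i<p. g i (thl i) = ub i)"
    apply (rule exI[of _ xb], rule exI[of _ mul], rule exI[of _ xil], rule exI[of _ thb], rule exI[of _ phb])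
    using S.x_lim S.th_lim S.ph_lim C(1,2,4) Bxi flim hx gth by blast
  have part2: "\<forall>t\<ge>0. (\<forall>i<p. u_lo i < ereal (g i (\<theta> t i)) \<and> ereal (g i (\<theta> t i)) < u_hi i) \<and>
                 (\<forall>k<m. lam_lo k < ereal (f k (\<mu> t k)) \<and> ereal (f k (\<mu> t k)) < lam_hi k)"
  proof (intro allI impI conjI)
    fix t :: real and i assume i: "i < p"
    have "g i (\<theta> t i) \<in> open_ival (u_lo i) (u_hi i)" using g_rng i by blast
    then show "u_lo i < ereal (g i (\<theta> t i))" "ereal (g i (\<theta> t i)) < u_hi i" unfolding open_ival_def by auto
  next
    fix t :: real and k assume k: "k < m"
    have "f k (\<mu> t k) \<in> open_ival (lam_lo k) (lam_hi k)" using f_rng k by blast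
    then show "lam_lo k < ereal (f k (\<mu> t k))" "ereal (f k (\<mu> t k)) < lam_hi k" unfolding open_ival_def by auto
  qed
  show ?thesis using part1 part2 by blast
qed

end
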